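(* Let $(\Xi,\mathcal{F},P)$ be a probability space and $\{y_t\}_{t\in\mathbb{Z}}$ a real, mean-zero, covariance-stationary series on it; put $\mathcal{F}_t=\sigma(y_s,\,s\le t)$. Assume (D1) $P\{y_1^2>0\}=1$; (D2) $y_t=\sum_{s=0}^{\infty}\kappa_s\epsilon_{t-s}$ with $\kappa_0=1$, $\sum_s|\kappa_s|<\infty$, $\kappa(z)=\sum_s\kappa_s z^s\neq 0$ for $|z|\le 1$, where $\{\epsilon_t\}$ is a martingale difference sequence with respect to $\{\mathcal{F}_t\}$; (D3) $E[\epsilon_t^2\mid\mathcal{F}_{t-1}]=\sigma_\epsilon^2$ a.s. (constant); (D4) $\sup_t|\epsilon_t|\le K<\infty$ a.s. Fix $\beta\in[0,1]$, let $\theta_t,\bar P_t,e_t,\phi_t$ be generated by the recursive algorithm in the context, and assume there are random variables $k^*$ (integer, $0\le k^*<\infty$) and $K^*\in(0,1)$ such that a.s. $|\theta_{t+k^*}|\le K^*$ for all $t\ge1$. Then: (a) If $\tilde\kappa_j(t)$ ($j\ge0$, $t\ge1$) are $\mathcal{F}_{t-1}$-measurable with $|\tilde\kappa_j(t)|\le\tilde\kappa_j$ for all $j\ge0$, where $\sum_{j}\tilde\kappa_j<\infty$ a.s., then for every integer $p\ge1$ and each $0\le j<\infty$, almost surely as $t\to\infty$, $$\frac1t\sum_{s=2}^t\Big(\sum_{l=1}^{\min(j,s-1)}\tilde\kappa_{j-l}(s)\prod_{i=1}^l(s-i)^{-1}\bar P_{s-i}^{-1}\phi_{s-i-1}e_{s-i}\Big)^p\to0,$$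 $$\frac1t\sum_{s=2}^t\Big(\sum_{l=1}^{\min(j,s-1)}\tilde\kappa_{j-l}(s)\sum_{i=0}^l(s-i)^{-1}\bar P_{s-i}^{-1}\phi_{s-i-1}e_{s-i}\Big)^p\to0,$$ $$\frac1t\sum_{s=2}^t\Big(\sum_{l=1}^{\min(j,s-1)}\tilde\kappa_{j-l}(s)\prod_{i=1}^l(s-i)^{-1}\bar P_{s-i}^{-1}\phi_{s-i-1}e_{s-i}\Big)^p\epsilon_{s-j}^2\to0.$$ (b) For any integers $0\le i\le j<\infty$, $$\frac1t\sum_{s=1}^t(\kappa_j^\phi(s))^2\epsilon_{s-j}^2=\frac1t\sum_{s=i+1}^t(\kappa_j^\phi(s-i))^2\epsilon_{s-j}^2+o_{a.s.}(1).$$ (c) For integers $0\le j,l<\infty$ with $j\ne l$, $$\frac1t\sum_{s=\max(j+2,l+2)}^t\kappa_j^\phi(s)\epsilon_{s-j}\kappa_l^\phi(s)\epsilon_{s-l}\to0\quad\text{a.s.}$$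
   Context: Recursive algorithm: set $\theta_1=0$, $\bar P_1=0$, $e_1=y_1$, $x_1=y_1$, $\phi_1=x_1$, and for $t\ge2$: $x_t=y_t-\beta\theta_{t-1}x_{t-1}$; $e_t=y_t-\theta_{t-1}e_{t-1}$; $\phi_t=x_t-\theta_{t-1}\phi_{t-1}$; $\bar P_t=\frac1t\sum_{s=1}^{t-1}\phi_s^2$; $\theta_t=\theta_{t-1}+\bar P_t^{-1}\frac1t\phi_{t-1}e_t$. Coefficients: for $t\ge1$, $j\ge0$ (empty products equal 1), $\kappa_j^x(t)=\sum_{l=0}^{\min(j,t-1)}(-\beta)^l\kappa_{j-l}\prod_{i=1}^l\theta_{t-i}$; $\kappa_j^\phi(1)=\kappa_j$ and $\kappa_j^\phi(t)=\kappa_j^x(t)-\theta_{t-1}\kappa_{j-1}^\phi(t-1)$ for $t\ge2$, with $\kappa_{-1}^\phi(\cdot):=0$. These are the coefficients in $\phi_t=\sum_{j\ge0}\kappa_j^\phi(t)\epsilon_{t-j}$. The notation $o_{a.s.}(1)$ denotes a term converging to $0$ almost surely as $t\to\infty$. *)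

theory Defs
  imports "HOL-Probability.Probability"
begin

definition nat_filt :: "'a measure \<Rightarrow> (int \<Rightarrow> 'a \<Rightarrow> real) \<Rightarrow> int \<Rightarrow> 'a measure" where
  "nat_filt M y t = sigma (space M)
     {y s -` A \<inter> space M | s A. s \<le> t \<and> A \<in> sets borel}"

text \<open>The recursive algorithm, run on a sample path y_1, y_2, ... (given as a function
  nat => real; index 0 is unused).  algo_state beta y t = (theta_t, e_t, x_t, phi_t, S_t)
  where S_t = sum_{s=1}^{t-1} phi_s^2.  Index t = 0 is a dummy state.\<close>
fun algo_state :: "real \<Rightarrow> (nat \<Rightarrow> real) \<Rightarrow> nat \<Rightarrow> real \<times> real \<times> real \<times> real \<times> real" where
  "algo_state \<beta> y 0 = (0, 0, 0, 0, 0)"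
| "algo_state \<beta> y (Suc 0) = (0, y 1, y 1, y 1, 0)"
| "algo_state \<beta> y (Suc (Suc n)) =
     (let t = Suc (Suc n);
          (\<theta>p, ep, xp, \<phi>p, Sp) = algo_state \<beta> y (Suc n);
          xt = y t - \<beta> * \<theta>p * xp;
          et = y t - \<theta>p * ep;
          \<phi>t = xt - \<theta>p * \<phi>p;
          St = Sp + \<phi>p ^ 2;
          Pt = St / real t;
          \<theta>t = \<theta>p + inverse Pt * (1 / real t) * \<phi>p * et
      in (\<theta>t, et, xt, \<phi>t, St))"

definition alg_theta :: "real \<Rightarrow> (nat \<Rightarrow> real) \<Rightarrow> nat \<Rightarrow> real" where
  "alg_theta \<beta> y t = fst (algo_state \<beta> y t)"
definition alg_e :: "real \<Rightarrow> (nat \<Rightarrow> real) \<Rightarrow> nat \<Rightarrow> real" where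
  "alg_e \<beta> y t = fst (snd (algo_state \<beta> y t))"
definition alg_x :: "real \<Rightarrow> (nat \<Rightarrow> real) \<Rightarrow> nat \<Rightarrow> real" where
  "alg_x \<beta> y t = fst (snd (snd (algo_state \<beta> y t)))"
definition alg_phi :: "real \<Rightarrow> (nat \<Rightarrow> real) \<Rightarrow> nat \<Rightarrow> real" where
  "alg_phi \<beta> y t = fst (snd (snd (snd (algo_state \<beta> y t))))"
definition alg_Pbar :: "real \<Rightarrow> (nat \<Rightarrow> real) \<Rightarrow> nat \<Rightarrow> real" where
  "alg_Pbar \<beta> y t = (1 / real t) * (\<Sum>s = 1..<t. (alg_phi \<beta> y s) ^ 2)"

definition kappa_x :: "(nat \<Rightarrow> real) \<Rightarrow> real \<Rightarrow> (nat \<Rightarrow> real) \<Rightarrow> nat \<Rightarrow> nat \<Rightarrow> real" where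
  "kappa_x \<kappa> \<beta> \<theta> t j =
     (\<Sum>l = 0..min j (t - 1). (- \<beta>) ^ l * \<kappa> (j - l) * (\<Prod>i = 1..l. \<theta> (t - i)))"

fun kappa_phi :: "(nat \<Rightarrow> real) \<Rightarrow> real \<Rightarrow> (nat \<Rightarrow> real) \<Rightarrow> nat \<Rightarrow> nat \<Rightarrow> real" where
  "kappa_phi \<kappa> \<beta> \<theta> 0 j = 0"
| "kappa_phi \<kappa> \<beta> \<theta> (Suc 0) j = \<kappa> j"
| "kappa_phi \<kappa> \<beta> \<theta> (Suc (Suc n)) j =
     kappa_x \<kappa> \<beta> \<theta> (Suc (Suc n)) j
     - (if j = 0 then 0 else \<theta> (Suc n) * kappa_phi \<kappa> \<beta> \<theta> (Suc n) (j - 1))"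

end

theory Submission
  imports Defs
begin

definition alg_S :: "real \<Rightarrow> (nat \<Rightarrow> real) \<Rightarrow> nat \<Rightarrow> real" where
  "alg_S \<beta> y t = snd (snd (snd (snd (algo_state \<beta> y t))))"

lemma algo_state_SS:
  "algo_state \<beta> y (Suc (Suc n)) =
    (alg_theta \<beta> y (Suc n) + inverse ((alg_S \<beta> y (Suc n) + (alg_phi \<beta> y (Suc n))^2) / real (Suc (Suc n)))
        * (1 / real (Suc (Suc n))) * alg_phi \<beta> y (Suc n) * (y (Suc (Suc n)) - alg_theta \<beta> y (Suc n) * alg_e \<beta> y (Suc n)),
     y (Suc (Suc n)) - alg_theta \<beta> y (Suc n) * alg_e \<beta> y (Suc n),
     y (Suc (Suc n)) - \<beta> * alg_theta \<beta> y (Suc n) * alg_x \<beta> y (Suc n),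
     (y (Suc (Suc n)) - \<beta> * alg_theta \<beta> y (Suc n) * alg_x \<beta> y (Suc n)) - alg_theta \<beta> y (Suc n) * alg_phi \<beta> y (Suc n),
     alg_S \<beta> y (Suc n) + (alg_phi \<beta> y (Suc n))^2)"
proof -
  obtain a b c d e where h: "algo_state \<beta> y (Suc n) = (a,b,c,d,e)" by (cases "algo_state \<beta> y (Suc n)") auto
  show ?thesis unfolding alg_theta_def alg_e_def alg_x_def alg_phi_def alg_S_def
    by (simp add: h Let_def)
qed

lemma alg_SS:
  "alg_theta \<beta> y (Suc (Suc n)) = alg_theta \<beta> y (Suc n) + inverse (alg_S \<beta> y (Suc (Suc n)) / real (Suc (Suc n)))
        * (1 / real (Suc (Suc n))) * alg_phi \<beta> y (Suc n) * alg_e \<beta> y (Suc (Suc n))"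
  "alg_e \<beta> y (Suc (Suc n)) = y (Suc (Suc n)) - alg_theta \<beta> y (Suc n) * alg_e \<beta> y (Suc n)"
  "alg_x \<beta> y (Suc (Suc n)) = y (Suc (Suc n)) - \<beta> * alg_theta \<beta> y (Suc n) * alg_x \<beta> y (Suc n)"
  "alg_phi \<beta> y (Suc (Suc n)) = alg_x \<beta> y (Suc (Suc n)) - alg_theta \<beta> y (Suc n) * alg_phi \<beta> y (Suc n)"
  "alg_S \<beta> y (Suc (Suc n)) = alg_S \<beta> y (Suc n) + (alg_phi \<beta> y (Suc n))^2"
  by (simp_all del: algo_state.simps add: alg_theta_def alg_e_def alg_x_def alg_phi_def alg_S_def algo_state_SS[unfolded alg_theta_def alg_e_def alg_x_def alg_phi_def alg_S_def])

lemma alg_1: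
  "alg_theta \<beta> y (Suc 0) = 0" "alg_e \<beta> y (Suc 0) = y 1" "alg_x \<beta> y (Suc 0) = y 1"
  "alg_phi \<beta> y (Suc 0) = y 1" "alg_S \<beta> y (Suc 0) = 0"
  by (simp_all add: alg_theta_def alg_e_def alg_x_def alg_phi_def alg_S_def)

lemma alg_0:
  "alg_theta \<beta> y 0 = 0" "alg_e \<beta> y 0 = 0" "alg_x \<beta> y 0 = 0"
  "alg_phi \<beta> y 0 = 0" "alg_S \<beta> y 0 = 0"
  by (simp_all add: alg_theta_def alg_e_def alg_x_def alg_phi_def alg_S_def)

lemma alg_S_sum: "t \<ge> 1 \<Longrightarrow> alg_S \<beta> y t = (\<Sum>s = 1..<t. (alg_phi \<beta> y s)^2)"
proof (induction t rule: nat_induct_at_least)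
  case base then show ?case by (simp add: alg_1)
next
  case (Suc n)
  then obtain m where m: "n = Suc m" by (cases n) auto
  show ?case using Suc by (simp add: m alg_SS)
qed

lemma alg_Pbar_S: "t \<ge> 1 \<Longrightarrow> alg_Pbar \<beta> y t = alg_S \<beta> y t / real t"
  by (simp add: alg_Pbar_def alg_S_sum)

lemma alg_S_nonneg: "alg_S \<beta> y t \<ge> 0"
proof (cases "t \<ge> 1")
  case True then show ?thesis by (simp add: alg_S_sum sum_nonneg)
next
  case False then have "t = 0" by simp
  then show ?thesis by (simp add: alg_0)
qed

lemma alg_S_mono: "s \<le> t \<Longrightarrow> alg_S \<beta> y s \<le> alg_S \<beta> y t"
proof (induction t rule: dec_induct)
  case base then show ?case by simp
next
  case (step n)
  have "alg_S \<beta> y n \<le> alg_S \<beta> y (Suc n)"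
  proof (cases n)
    case 0 then show ?thesis by (simp add: alg_0 alg_1)
  next
    case (Suc m) then show ?thesis by (simp add: alg_SS)
  qed
  then show ?case using step by linarith
qed

definition dth :: "real \<Rightarrow> (nat \<Rightarrow> real) \<Rightarrow> nat \<Rightarrow> real" where
  "dth \<beta> y u = (1 / real u) * inverse (alg_Pbar \<beta> y u) * alg_phi \<beta> y (u - 1) * alg_e \<beta> y u"

lemma dth_eq: "u \<ge> 1 \<Longrightarrow> dth \<beta> y u = alg_theta \<beta> y u - alg_theta \<beta> y (u - 1)"
proof -
  assume "u \<ge> 1"
  then consider "u = 1" | m where "u = Suc (Suc m)" by (metis One_nat_def Suc_le_D not0_implies_Suc less_eq_Suc_le) 
  then show ?thesis
  proof cases
    case 1 then show ?thesis by (simp add: dth_def alg_Pbar_def alg_1 alg_0)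
  next
    case 2
    have "alg_Pbar \<beta> y u = alg_S \<beta> y u / real u" using \<open>u \<ge> 1\<close> by (simp add: alg_Pbar_S)
    then show ?thesis using 2 by (simp add: dth_def alg_SS(1))
  qed
qed

lemma dth_S: "u \<ge> 1 \<Longrightarrow> dth \<beta> y u = alg_phi \<beta> y (u - 1) * alg_e \<beta> y u / alg_S \<beta> y u"
  by (simp add: dth_def alg_Pbar_S field_simps)

lemma bseq_null_mult:
  fixes f g :: "nat \<Rightarrow> real"
  assumes "Bseq f" "g \<longlonglongrightarrow> 0" shows "(\<lambda>n. f n * g n) \<longlonglongrightarrow> 0"
proof -
  obtain K where K: "K > 0" "\<And>n. norm (f n) \<le> K" using assms(1) by (auto simp: Bseq_def)
  have "(\<lambda>n. K * \<bar>g n\<bar>) \<longlonglongrightarrow> 0"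
    using tendsto_mult_right_zero[OF tendsto_rabs_zero[OF assms(2)]] by simp
  moreover have "\<forall>\<^sub>F n in sequentially. norm (f n * g n) \<le> K * \<bar>g n\<bar>"
    using K by (auto simp: abs_mult intro!: always_eventually mult_right_mono)
  ultimately show ?thesis by (rule Lim_null_comparison[rotated])
qed

definition sv :: "(nat \<Rightarrow> real) \<Rightarrow> bool" where
  "sv f \<longleftrightarrow> Bseq f \<and> (\<lambda>n. f (Suc n) - f n) \<longlonglongrightarrow> 0"

lemma sv_const: "sv (\<lambda>n. c)"
  by (simp add: sv_def)

lemma Bseq_add2:
  fixes f g :: "nat \<Rightarrow> real"
  assumes "Bseq f" "Bseq g" shows "Bseq (\<lambda>n. f n + g n)"
proof -
  obtain K1 K2 where "\<And>n. norm (f n) \<le> K1" "\<And>n. norm (g n) \<le> K2" using assms by (auto simp: Bseq_def)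
  then have "\<And>n. norm (f n + g n) \<le> K1 + K2" by (metis add_mono norm_triangle_ineq order_trans)
  then show ?thesis by (rule BseqI')
qed

lemma sv_add: "sv f \<Longrightarrow> sv g \<Longrightarrow> sv (\<lambda>n. f n + g n)"
proof -
  assume f: "sv f" and g: "sv g"
  have "(\<lambda>n. (f (Suc n) - f n) + (g (Suc n) - g n)) \<longlonglongrightarrow> 0 + 0"
    using f g unfolding sv_def by (intro tendsto_add) auto
  moreover have "\<And>n. (f (Suc n) - f n) + (g (Suc n) - g n) = (f (Suc n) + g (Suc n)) - (f n + g n)" by simp
  ultimately show ?thesis using f g Bseq_add2 unfolding sv_def by simp
qed

lemma sv_uminus: "sv f \<Longrightarrow> sv (\<lambda>n. - f n)"
proof -
  assume f: "sv f"
  have "(\<lambda>n. - (f (Suc n) - f n)) \<longlonglongrightarrow> - 0"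
    using f unfolding sv_def by (intro tendsto_minus) auto
  then show ?thesis using f unfolding sv_def by (simp add: Bseq_minus_iff)
qed

lemma sv_diff: "sv f \<Longrightarrow> sv g \<Longrightarrow> sv (\<lambda>n. f n - g n)"
  using sv_add[of f "\<lambda>n. - g n"] sv_uminus[of g] by simp

lemma sv_mult: "sv f \<Longrightarrow> sv g \<Longrightarrow> sv (\<lambda>n. f n * g n)"
proof -
  assume f: "sv f" and g: "sv g"
  have "Bseq (\<lambda>n. f n * g n)" using f g unfolding sv_def by (intro Bseq_mult) auto
  moreover
  have bf0: "Bseq f" using f unfolding sv_def by simp
  have bf: "Bseq (\<lambda>n. f (Suc n))" using Bseq_ignore_initial_segment[OF bf0, of 1] by simp
  have bg: "Bseq g" using g unfolding sv_def by simp
  have df: "(\<lambda>n. f (Suc n) - f n) \<longlonglongrightarrow> 0" and dg: "(\<lambda>n. g (Suc n) - g n) \<longlonglongrightarrow> 0"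
    using f g unfolding sv_def by simp_all
  have "(\<lambda>n. f (Suc n) * (g (Suc n) - g n) + g n * (f (Suc n) - f n)) \<longlonglongrightarrow> 0 + 0"
    by (rule tendsto_add[OF bseq_null_mult[OF bf dg] bseq_null_mult[OF bg df]])
  moreover have "\<And>n. f (Suc n) * (g (Suc n) - g n) + g n * (f (Suc n) - f n) = f (Suc n) * g (Suc n) - f n * g n"
    by (simp add: algebra_simps)
  ultimately show ?thesis unfolding sv_def by simp
qed

lemma sv_cmult: "sv f \<Longrightarrow> sv (\<lambda>n. c * f n)"
  using sv_mult[OF sv_const] by blast

lemma sv_sum: "(\<And>i. i \<in> A \<Longrightarrow> sv (f i)) \<Longrightarrow> sv (\<lambda>n. \<Sum>i\<in>A. f i n)"
proof (induction A rule: infinite_finite_induct)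
  case (infinite A) then show ?case by (simp add: sv_const)
next
  case empty then show ?case by (simp add: sv_const)
next
  case (insert x F) then show ?case by (simp add: sv_add)
qed

lemma sv_prod: "(\<And>i. i \<in> A \<Longrightarrow> sv (f i)) \<Longrightarrow> sv (\<lambda>n. \<Prod>i\<in>A. f i n)"
proof (induction A rule: infinite_finite_induct)
  case (infinite A) then show ?case by (simp add: sv_const)
next
  case empty then show ?case by (simp add: sv_const)
next
  case (insert x F) then show ?case by (simp add: sv_mult)
qed

lemma sv_shift: "sv f \<Longrightarrow> sv (\<lambda>n. f (n - k))"
proof -
  assume f: "sv f"
  obtain K where K: "\<And>n. norm (f n) \<le> K" using f unfolding sv_def Bseq_def by blast
  have "Bseq (\<lambda>n. f (n - k))" by (rule BseqI'[where K = K]) (rule K)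
  moreover have "(\<lambda>n. f (Suc (n + k) - k) - f (n + k - k)) \<longlonglongrightarrow> 0"
  proof -
    have "(\<lambda>n. f (Suc (n + k) - k) - f (n + k - k)) = (\<lambda>n. f (Suc n) - f n)"
      by (rule ext) simp
    then show ?thesis using f unfolding sv_def by simp
  qed
  then have "(\<lambda>n. f (Suc n - k) - f (n - k)) \<longlonglongrightarrow> 0" by (rule LIMSEQ_offset[where k = k])
  ultimately show ?thesis unfolding sv_def by simp
qed

lemma sv_cong_ev: "sv f \<Longrightarrow> eventually (\<lambda>n. f n = g n) sequentially \<Longrightarrow> sv g"
proof -
  assume f: "sv f" and ev: "eventually (\<lambda>n. f n = g n) sequentially"
  then obtain N where N: "\<And>n. n \<ge> N \<Longrightarrow> f n = g n" by (auto simp: eventually_sequentially)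
  have e1: "(\<lambda>n. g (n + N)) = (\<lambda>n. f (n + N))" using N by auto
  have e2: "(\<lambda>n. g (Suc (n + N)) - g (n + N)) = (\<lambda>n. f (Suc (n + N)) - f (n + N))" using N by auto
  have "Bseq (\<lambda>n. g (n + N))" unfolding e1 using f unfolding sv_def by (intro Bseq_ignore_initial_segment) auto
  then have bg: "Bseq g" by (rule Bseq_offset)
  have l1: "(\<lambda>n. (\<lambda>m. f (Suc m) - f m) (n + N)) \<longlonglongrightarrow> 0"
    by (rule LIMSEQ_ignore_initial_segment) (use f in \<open>simp add: sv_def\<close>)
  have "(\<lambda>n. g (Suc (n + N)) - g (n + N)) \<longlonglongrightarrow> 0" unfolding e2
    using l1 by simp
  then have "(\<lambda>n. g (Suc n) - g n) \<longlonglongrightarrow> 0" by (rule LIMSEQ_offset[where k = N])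
  then show ?thesis using bg unfolding sv_def by simp
qed

lemma sv_diff_shift: "sv f \<Longrightarrow> (\<lambda>n. f n - f (n - i)) \<longlonglongrightarrow> 0"
proof (induction i)
  case 0 then show ?case by simp
next
  case (Suc i)
  have "(\<lambda>n. f (n - i) - f (n - Suc i)) \<longlonglongrightarrow> 0"
    apply (rule LIMSEQ_offset[where k = "Suc i"])
    using Suc.prems unfolding sv_def by (simp add: add.commute)
  from tendsto_add[OF Suc.IH[OF Suc.prems] this] show ?case by (simp add: algebra_simps)
qed

lemma sv_Bseq: "sv f \<Longrightarrow> Bseq f" by (simp add: sv_def)

lemma bounded_rec:
  fixes a :: "nat \<Rightarrow> real"
  assumes rec: "\<And>n. n \<ge> N \<Longrightarrow> \<bar>a (Suc n)\<bar> \<le> B + c * \<bar>a n\<bar>" and c: "0 \<le> c" "c < 1"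
  shows "Bseq a"
proof -
  define R where "R = max \<bar>a N\<bar> (B / (1 - c))"
  have BR: "B + c * R \<le> R"
  proof -
    have "B / (1 - c) \<le> R" by (simp add: R_def)
    then have "B \<le> (1 - c) * R" using c by (simp add: field_simps)
    then show ?thesis by (simp add: algebra_simps)
  qed
  have "\<bar>a n\<bar> \<le> R" if "n \<ge> N" for n
    using that
  proof (induction n rule: dec_induct)
    case base then show ?case by (simp add: R_def)
  next
    case (step n)
    have "\<bar>a (Suc n)\<bar> \<le> B + c * \<bar>a n\<bar>" using rec step by simp
    also have "\<dots> \<le> B + c * R" using step c by (simp add: mult_left_mono)
    finally show ?case using BR by linarith
  qed
  then have "Bseq (\<lambda>n. a (n + N))" by (intro BseqI'[where K = R]) auto
  then show ?thesis by (rule Bseq_offset)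
qed

lemma kappa_x_ev: "t \<ge> Suc j \<Longrightarrow> kappa_x \<kappa> \<beta> \<theta> t j =
   (\<Sum>l = 0..j. (- \<beta>) ^ l * \<kappa> (j - l) * (\<Prod>i = 1..l. \<theta> (t - i)))"
  unfolding kappa_x_def by (simp add: min_absorb1)

lemma kx_sv: "sv \<theta> \<Longrightarrow> sv (\<lambda>t. kappa_x \<kappa> \<beta> \<theta> t j)"
proof -
  assume th: "sv \<theta>"
  have "sv (\<lambda>t. \<Sum>l = 0..j. (- \<beta>) ^ l * \<kappa> (j - l) * (\<Prod>i = 1..l. \<theta> (t - i)))"
    by (intro sv_sum sv_cmult sv_prod sv_shift th)
  then show ?thesis
    by (rule sv_cong_ev) (auto simp: eventually_sequentially kappa_x_ev intro!: exI[of _ "Suc j"])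
qed

lemma kappa_phi_ge2: "t \<ge> 2 \<Longrightarrow> kappa_phi \<kappa> \<beta> \<theta> t j =
   kappa_x \<kappa> \<beta> \<theta> t j - (if j = 0 then 0 else \<theta> (t - 1) * kappa_phi \<kappa> \<beta> \<theta> (t - 1) (j - 1))"
proof -
  assume "t \<ge> 2"
  then obtain n where "t = Suc (Suc n)" by (metis add_2_eq_Suc le_Suc_ex)
  then show ?thesis by simp
qed

lemma kphi_sv: "sv \<theta> \<Longrightarrow> sv (\<lambda>t. kappa_phi \<kappa> \<beta> \<theta> t j)"
proof (induction j)
  case 0
  show ?case
    by (rule sv_cong_ev[OF kx_sv[OF 0, of \<kappa> \<beta> 0]])
       (auto simp: eventually_sequentially kappa_phi_ge2 intro!: exI[of _ 2])
next
  case (Suc j)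
  have "sv (\<lambda>t. kappa_x \<kappa> \<beta> \<theta> t (Suc j) - \<theta> (t - 1) * kappa_phi \<kappa> \<beta> \<theta> (t - 1) j)"
    by (intro sv_diff sv_mult kx_sv sv_shift Suc)
  then show ?case
    by (rule sv_cong_ev) (auto simp: eventually_sequentially kappa_phi_ge2 intro!: exI[of _ 2])
qed

lemma pow_bnd: "\<bar>a::real\<bar> \<le> C \<Longrightarrow> \<bar>a ^ m\<bar> \<le> C ^ m"
  by (simp add: power_abs power_mono)

lemma pow_bnd': "\<bar>a::real\<bar> \<le> C \<Longrightarrow> a ^ m \<le> C ^ m"
  using pow_bnd[of a C m] by linarith

context prob_space begin

lemma intb: fixes f :: "'a \<Rightarrow> real" and B :: real shows "f \<in> borel_measurable M \<Longrightarrow> (\<And>x. x \<in> space M \<Longrightarrow> \<bar>f x\<bar> \<le> B) \<Longrightarrow> integrable M f"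
  by (rule integrable_const_bound[where B = B]) auto

lemma mds_slln:
  fixes \<xi> :: "nat \<Rightarrow> 'a \<Rightarrow> real"
  assumes meas: "\<And>n. \<xi> n \<in> borel_measurable M"
    and bnd: "\<And>n x. x \<in> space M \<Longrightarrow> \<bar>\<xi> n x\<bar> \<le> C"
    and o1: "\<And>n. integral\<^sup>L M (\<lambda>x. (\<Sum>u<n. \<xi> u x) * \<xi> n x) = 0"
    and o3: "\<And>n. integral\<^sup>L M (\<lambda>x. (\<Sum>u<n. \<xi> u x) ^ 3 * \<xi> n x) = 0"
  shows "AE x in M. (\<lambda>n. (\<Sum>u<n. \<xi> u x) / real n) \<longlonglongrightarrow> 0"
proof -
  define S where "S n x = (\<Sum>u<n. \<xi> u x)" for n x
  obtain x0 where "x0 \<in> space M" using not_empty by blast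
  then have C0: "0 \<le> C" using bnd[of x0 0] by linarith
  have Smeas[measurable]: "S n \<in> borel_measurable M" for n unfolding S_def using meas by measurable
  have Sb: "\<bar>S n x\<bar> \<le> real n * C" if "x \<in> space M" for n x
  proof -
    have "\<bar>S n x\<bar> \<le> (\<Sum>u<n. \<bar>\<xi> u x\<bar>)" unfolding S_def by (rule sum_abs)
    also have "\<dots> \<le> (\<Sum>u<n. C)" by (intro sum_mono bnd that)
    finally show ?thesis by simp
  qed
  have SSuc: "S (Suc n) x = S n x + \<xi> n x" for n x unfolding S_def by simp
  have xi_meas[measurable]: "\<xi> n \<in> borel_measurable M" for n by (rule meas)
  have iS: "integrable M (\<lambda>x. S n x ^ k * \<xi> n x ^ m)" for n k m
  proof (rule intb[where B = "(real n * C) ^ k * C ^ m"])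
    show "(\<lambda>x. S n x ^ k * \<xi> n x ^ m) \<in> borel_measurable M" by measurable
    fix x assume x: "x \<in> space M"
    have "\<bar>S n x ^ k * \<xi> n x ^ m\<bar> = \<bar>S n x\<bar> ^ k * \<bar>\<xi> n x\<bar> ^ m" by (simp add: abs_mult power_abs)
    also have "\<dots> \<le> (real n * C) ^ k * C ^ m"
      by (intro mult_mono power_mono Sb bnd x) (auto simp: C0)
    finally show "\<bar>S n x ^ k * \<xi> n x ^ m\<bar> \<le> (real n * C) ^ k * C ^ m" .
  qed
  have iS1: "integrable M (\<lambda>x. S n x ^ k)" for n k using iS[of n k 0] by simp
  have iX: "integrable M (\<lambda>x. \<xi> n x ^ m)" for n m using iS[of n 0 m] by simp
  have E2: "integral\<^sup>L M (\<lambda>x. S n x ^ 2) \<le> real n * C^2" for n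
  proof (induction n)
    case 0 then show ?case by (simp add: S_def)
  next
    case (Suc n)
    have "integral\<^sup>L M (\<lambda>x. S (Suc n) x ^ 2) =
        integral\<^sup>L M (\<lambda>x. S n x ^ 2 + 2 * (S n x * \<xi> n x) + \<xi> n x ^ 2)"
      by (simp add: SSuc power2_eq_square algebra_simps)
    also have "\<dots> = integral\<^sup>L M (\<lambda>x. S n x ^ 2) + 2 * integral\<^sup>L M (\<lambda>x. S n x * \<xi> n x)
         + integral\<^sup>L M (\<lambda>x. \<xi> n x ^ 2)"
      using iS1[of n 2] iS[of n 1 1] iX[of n 2] by simp
    also have "integral\<^sup>L M (\<lambda>x. S n x * \<xi> n x) = 0" using o1[of n] by (simp add: S_def)
    also have "integral\<^sup>L M (\<lambda>x. \<xi> n x ^ 2) \<le> integral\<^sup>L M (\<lambda>x. C ^ 2)"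
      using iX by (intro integral_mono) (auto intro!: pow_bnd' bnd)
    finally show ?case using Suc by (simp add: prob_space algebra_simps)
  qed
  have E4: "integral\<^sup>L M (\<lambda>x. S n x ^ 4) \<le> 11 * C^4 * real n ^ 2" for n
  proof (induction n)
    case 0 then show ?case by (simp add: S_def)
  next
    case (Suc n)
    have "integral\<^sup>L M (\<lambda>x. S (Suc n) x ^ 4) =
        integral\<^sup>L M (\<lambda>x. S n x ^ 4 + 4 * (S n x ^ 3 * \<xi> n x) + 6 * (S n x ^ 2 * \<xi> n x ^ 2)
           + 4 * (S n x * \<xi> n x ^ 3) + \<xi> n x ^ 4)"
      by (rule Bochner_Integration.integral_cong) (simp_all add: SSuc power2_eq_square power3_eq_cube power4_eq_xxxx algebra_simps)
    also have "\<dots> = integral\<^sup>L M (\<lambda>x. S n x ^ 4) + 4 * integral\<^sup>L M (\<lambda>x. S n x ^ 3 * \<xi> n x)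
         + 6 * integral\<^sup>L M (\<lambda>x. S n x ^ 2 * \<xi> n x ^ 2) + 4 * integral\<^sup>L M (\<lambda>x. S n x * \<xi> n x ^ 3)
         + integral\<^sup>L M (\<lambda>x. \<xi> n x ^ 4)"
      using iS1[of n 4] iS[of n 3 1] iS[of n 2 2] iS[of n 1 3] iX[of n 4] by simp
    also have "integral\<^sup>L M (\<lambda>x. S n x ^ 3 * \<xi> n x) = 0" using o3[of n] by (simp add: S_def)
    also have "integral\<^sup>L M (\<lambda>x. S n x ^ 2 * \<xi> n x ^ 2) \<le> integral\<^sup>L M (\<lambda>x. C^2 * S n x ^ 2)"
    proof (rule integral_mono)
      show "integrable M (\<lambda>x. S n x ^ 2 * \<xi> n x ^ 2)" using iS[of n 2 2] by simp
      show "integrable M (\<lambda>x. C^2 * S n x ^ 2)" using iS1[of n 2] by simp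
      fix x assume x: "x \<in> space M"
      have "\<xi> n x ^ 2 \<le> C ^ 2" by (intro pow_bnd' bnd x)
      then have "S n x ^ 2 * \<xi> n x ^ 2 \<le> S n x ^ 2 * C^2" by (intro mult_left_mono) auto
      then show "S n x ^ 2 * \<xi> n x ^ 2 \<le> C^2 * S n x ^ 2" by (simp add: mult.commute)
    qed
    also have "integral\<^sup>L M (\<lambda>x. C^2 * S n x ^ 2) \<le> C^2 * (real n * C^2)"
      using E2[of n] by (simp add: mult_left_mono)
    also have "integral\<^sup>L M (\<lambda>x. S n x * \<xi> n x ^ 3) \<le> integral\<^sup>L M (\<lambda>x. real n * C * C ^ 3)"
    proof (rule integral_mono)
      show "integrable M (\<lambda>x. S n x * \<xi> n x ^ 3)" using iS[of n 1 3] by simp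
      fix x assume x: "x \<in> space M"
      have "S n x * \<xi> n x ^ 3 \<le> \<bar>S n x\<bar> * \<bar>\<xi> n x ^ 3\<bar>" by (simp add: abs_mult[symmetric])
      also have "\<dots> \<le> (real n * C) * C ^ 3"
        by (intro mult_mono Sb x pow_bnd bnd) (auto simp: C0)
      finally show "S n x * \<xi> n x ^ 3 \<le> real n * C * C ^ 3" .
    qed simp
    also have "integral\<^sup>L M (\<lambda>x. \<xi> n x ^ 4) \<le> integral\<^sup>L M (\<lambda>x. C ^ 4)"
      using iX by (intro integral_mono) (auto intro!: pow_bnd' bnd)
    finally have "integral\<^sup>L M (\<lambda>x. S (Suc n) x ^ 4) \<le> 11 * C ^ 4 * real n ^ 2 + 10 * C^4 * real n + C^4"
      using Suc by (simp add: prob_space algebra_simps power2_eq_square power3_eq_cube power4_eq_xxxx)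
    also have "\<dots> \<le> 11 * C ^ 4 * real (Suc n) ^ 2"
    proof -
      have "0 \<le> C^4" using C0 by simp
      then have "10 * C^4 * real n + C^4 \<le> 11 * C^4 * (2 * real n + 1)"
        by (simp add: algebra_simps mult_left_mono)
      then show ?thesis by (simp add: power2_eq_square algebra_simps)
    qed
    finally show ?case .
  qed
  define Z where "Z n x = S n x ^ 4 / real n ^ 4" for n x
  have Zmeas[measurable]: "Z n \<in> borel_measurable M" for n unfolding Z_def by measurable
  have Zint: "integrable M (Z n)" for n unfolding Z_def using iS1[of n 4] by simp
  have Znn: "0 \<le> Z n x" for n x unfolding Z_def by simp
  have EZ: "integral\<^sup>L M (Z n) \<le> 11 * C^4 * inverse (real n ^ 2)" for n
  proof (cases "n = 0")
    case True
    have "Z 0 = (\<lambda>x. 0)" by (rule ext) (simp add: Z_def S_def)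
    then show ?thesis using True by simp
  next
    case False
    have "integral\<^sup>L M (Z n) = integral\<^sup>L M (\<lambda>x. S n x ^ 4) / real n ^ 4" unfolding Z_def by simp
    also have "\<dots> \<le> 11 * C^4 * real n ^ 2 / real n ^ 4" using E4[of n] by (intro divide_right_mono) auto
    also have "\<dots> = 11 * C^4 * inverse (real n ^ 2)" using False by (simp add: field_simps power2_eq_square power4_eq_xxxx)
    finally show ?thesis .
  qed
  have sm: "summable (\<lambda>n. 11 * C^4 * inverse (real n ^ 2))"
    by (intro summable_mult inverse_power_summable) simp
  have "(\<integral>\<^sup>+x. (\<Sum>n. ennreal (Z n x)) \<partial>M) = (\<Sum>n. \<integral>\<^sup>+x. ennreal (Z n x) \<partial>M)"
    by (rule nn_integral_suminf) measurable
  also have "\<dots> = (\<Sum>n. ennreal (integral\<^sup>L M (Z n)))"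
    by (rule suminf_cong, rule nn_integral_eq_integral[OF Zint]) (simp add: Znn)
  also have "\<dots> \<le> (\<Sum>n. ennreal (11 * C^4 * inverse (real n ^ 2)))"
    by (rule suminf_le[OF _ summableI summableI], rule ennreal_leI, rule EZ)
  also have "\<dots> < \<infinity>"
  proof -
    have "\<And>i. 0 \<le> 11 * C^4 * inverse (real i ^ 2)" using C0 by simp
    from ennreal_suminf_neq_top[OF sm this] show ?thesis by (simp add: less_top[symmetric])
  qed
  finally have "(\<integral>\<^sup>+x. (\<Sum>n. ennreal (Z n x)) \<partial>M) \<noteq> \<infinity>" by simp
  then have "AE x in M. (\<Sum>n. ennreal (Z n x)) \<noteq> \<infinity>"
    by (intro nn_integral_PInf_AE) measurable
  then show ?thesis
  proof eventually_elim
    case (elim x)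
    then have "summable (\<lambda>n. Z n x)" by (intro summable_suminf_not_top Znn) simp
    then have "(\<lambda>n. Z n x) \<longlonglongrightarrow> 0" by (rule summable_LIMSEQ_zero)
    then have "(\<lambda>n. sqrt (sqrt (Z n x))) \<longlonglongrightarrow> sqrt (sqrt 0)" by (intro tendsto_real_sqrt)
    moreover have "sqrt (sqrt (Z n x)) = \<bar>S n x / real n\<bar>" for n
    proof -
      have "Z n x = ((S n x / real n) ^ 2) ^ 2" unfolding Z_def by (simp add: power_divide flip: power_mult)
      then show ?thesis by (simp only: real_sqrt_abs abs_power2)
    qed
    ultimately have "(\<lambda>n. \<bar>S n x / real n\<bar>) \<longlonglongrightarrow> 0" by simp
    then show ?case unfolding S_def by (rule tendsto_rabs_zero_cancel)
  qed
qed

end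

lemma cesaro_abs:
  fixes a :: "nat \<Rightarrow> real"
  assumes a: "a \<longlonglongrightarrow> 0"
  shows "(\<lambda>t. (\<Sum>s\<le>t. \<bar>a s\<bar>) / real t) \<longlonglongrightarrow> 0"
proof (rule LIMSEQ_I)
  fix r :: real assume r: "0 < r"
  obtain N where N: "\<And>s. s \<ge> N \<Longrightarrow> \<bar>a s\<bar> < r / 4"
    using LIMSEQ_D[OF a, of "r/4"] r by auto
  define C0 where "C0 = (\<Sum>s<N. \<bar>a s\<bar>)"
  have C0: "0 \<le> C0" unfolding C0_def by (simp add: sum_nonneg)
  obtain T where T: "real T > 2 * C0 / r" using reals_Archimedean2 by blast
  show "\<exists>no. \<forall>n\<ge>no. norm ((\<Sum>s\<le>n. \<bar>a s\<bar>) / real n - 0) < r"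
  proof (intro exI allI impI)
    fix t assume t: "t \<ge> max (max N T) 1"
    then have tN: "t \<ge> N" and tpos: "real t \<ge> 1" and tT: "real t \<ge> real T" by auto
    have split: "{..t} = {..<N} \<union> {N..t}" using tN by auto
    have "(\<Sum>s\<le>t. \<bar>a s\<bar>) = C0 + (\<Sum>s=N..t. \<bar>a s\<bar>)"
      unfolding C0_def split by (subst sum.union_disjoint) auto
    also have "(\<Sum>s=N..t. \<bar>a s\<bar>) \<le> (\<Sum>s=N..t. r / 4)"
    proof (rule sum_mono)
      fix s assume "s \<in> {N..t}"
      then have "\<bar>a s\<bar> < r / 4" by (intro N) simp
      then show "\<bar>a s\<bar> \<le> r / 4" by simp
    qed
    also have "\<dots> = real (Suc t - N) * (r / 4)" by simp
    also have "\<dots> \<le> (2 * real t) * (r / 4)"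
    proof -
      have "real (Suc t - N) \<le> 2 * real t" using tpos by (simp add: of_nat_diff)
      then show ?thesis using r by (intro mult_right_mono) auto
    qed
    finally have le: "(\<Sum>s\<le>t. \<bar>a s\<bar>) \<le> C0 + real t * (r / 2)" by (simp add: mult.commute)
    have "C0 < real t * (r / 2)"
    proof -
      have "2 * C0 / r < real t" using T tT by linarith
      then show ?thesis using r by (simp add: field_simps)
    qed
    with le have "(\<Sum>s\<le>t. \<bar>a s\<bar>) < real t * r" by linarith
    then have "(\<Sum>s\<le>t. \<bar>a s\<bar>) / real t < r" using tpos by (simp add: field_simps)
    moreover have "0 \<le> (\<Sum>s\<le>t. \<bar>a s\<bar>) / real t" by (simp add: sum_nonneg)
    ultimately show "norm ((\<Sum>s\<le>t. \<bar>a s\<bar>) / real t - 0) < r" by simp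
  qed
qed

lemma cesaro:
  fixes a :: "nat \<Rightarrow> real"
  assumes a: "a \<longlonglongrightarrow> 0"
  shows "(\<lambda>t. (1 / real t) * (\<Sum>s = m..t. a s)) \<longlonglongrightarrow> 0"
proof (rule Lim_null_comparison[OF _ cesaro_abs[OF a]])
  show "\<forall>\<^sub>F t in sequentially. norm ((1 / real t) * (\<Sum>s = m..t. a s)) \<le> (\<Sum>s\<le>t. \<bar>a s\<bar>) / real t"
  proof (intro always_eventually allI)
    fix t
    have "\<bar>\<Sum>s = m..t. a s\<bar> \<le> (\<Sum>s = m..t. \<bar>a s\<bar>)" by (rule sum_abs)
    also have "\<dots> \<le> (\<Sum>s\<le>t. \<bar>a s\<bar>)" by (intro sum_mono2) auto
    finally show "norm ((1 / real t) * (\<Sum>s = m..t. a s)) \<le> (\<Sum>s\<le>t. \<bar>a s\<bar>) / real t"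
      by (simp add: abs_mult divide_right_mono)
  qed
qed

lemma null_shift: "(g :: nat \<Rightarrow> real) \<longlonglongrightarrow> 0 \<Longrightarrow> (\<lambda>s. g (s - i)) \<longlonglongrightarrow> 0"
  by (rule LIMSEQ_offset[where k = i]) simp

lemma null_Bseq: "(g :: nat \<Rightarrow> real) \<longlonglongrightarrow> a \<Longrightarrow> Bseq g"
  using convergent_imp_Bseq convergentI by blast

lemma Bseq_ev:
  fixes f :: "nat \<Rightarrow> real"
  assumes "\<And>n. n \<ge> N \<Longrightarrow> \<bar>f n\<bar> \<le> B" shows "Bseq f"
proof (rule Bseq_eventually_mono[of _ "\<lambda>n. B"])
  have "\<And>n. n \<ge> N \<Longrightarrow> norm (f n) \<le> norm B" using assms by fastforce
  then show "\<forall>\<^sub>F n in sequentially. norm (f n) \<le> norm ((\<lambda>n. B) n)" by (auto simp: eventually_sequentially)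
qed simp

lemma inner1:
  fixes D :: "nat \<Rightarrow> real" and kk :: "nat \<Rightarrow> nat \<Rightarrow> real"
  assumes D: "D \<longlonglongrightarrow> 0" and kk: "\<And>j t. t \<ge> 1 \<Longrightarrow> \<bar>kk j t\<bar> \<le> kb j"
  shows "(\<lambda>s. \<Sum>l = 1..min j (s - 1). kk (j - l) s * (\<Prod>i = 1..l. D (s - i))) \<longlonglongrightarrow> 0"
proof -
  have "(\<lambda>s. \<Sum>l = 1..j. kk (j - l) s * (\<Prod>i = 1..l. D (s - i))) \<longlonglongrightarrow> (\<Sum>l = 1..j. 0)"
  proof (intro tendsto_sum)
    fix l assume l: "l \<in> {1..j}"
    have "(\<lambda>s. \<Prod>i = 1..l. D (s - i)) \<longlonglongrightarrow> (\<Prod>i = 1..l. 0)"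
      by (intro tendsto_prod null_shift D)
    then have p0: "(\<lambda>s. \<Prod>i = 1..l. D (s - i)) \<longlonglongrightarrow> 0" using l by (simp add: power_0_left)
    have "Bseq (\<lambda>s. kk (j - l) s)" by (rule Bseq_ev[where N = 1]) (rule kk)
    from bseq_null_mult[OF this p0] show "(\<lambda>s. kk (j - l) s * (\<Prod>i = 1..l. D (s - i))) \<longlonglongrightarrow> 0" .
  qed
  then have "(\<lambda>s. \<Sum>l = 1..j. kk (j - l) s * (\<Prod>i = 1..l. D (s - i))) \<longlonglongrightarrow> 0" by simp
  then show ?thesis
    by (rule Lim_transform_eventually) (auto simp: eventually_sequentially min_absorb1 intro!: exI[of _ "Suc j"])
qed

lemma inner2:
  fixes D :: "nat \<Rightarrow> real" and kk :: "nat \<Rightarrow> nat \<Rightarrow> real"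
  assumes D: "D \<longlonglongrightarrow> 0" and kk: "\<And>j t. t \<ge> 1 \<Longrightarrow> \<bar>kk j t\<bar> \<le> kb j"
  shows "(\<lambda>s. \<Sum>l = 1..min j (s - 1). kk (j - l) s * (\<Sum>i = 0..l. D (s - i))) \<longlonglongrightarrow> 0"
proof -
  have "(\<lambda>s. \<Sum>l = 1..j. kk (j - l) s * (\<Sum>i = 0..l. D (s - i))) \<longlonglongrightarrow> (\<Sum>l = 1..j. 0)"
  proof (intro tendsto_sum)
    fix l assume l: "l \<in> {1..j}"
    have "(\<lambda>s. \<Sum>i = 0..l. D (s - i)) \<longlonglongrightarrow> (\<Sum>i = 0..l. 0)"
      by (intro tendsto_sum null_shift D)
    then have p0: "(\<lambda>s. \<Sum>i = 0..l. D (s - i)) \<longlonglongrightarrow> 0" by simp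
    have "Bseq (\<lambda>s. kk (j - l) s)" by (rule Bseq_ev[where N = 1]) (rule kk)
    from bseq_null_mult[OF this p0] show "(\<lambda>s. kk (j - l) s * (\<Sum>i = 0..l. D (s - i))) \<longlonglongrightarrow> 0" .
  qed
  then have "(\<lambda>s. \<Sum>l = 1..j. kk (j - l) s * (\<Sum>i = 0..l. D (s - i))) \<longlonglongrightarrow> 0" by simp
  then show ?thesis
    by (rule Lim_transform_eventually) (auto simp: eventually_sequentially min_absorb1 intro!: exI[of _ "Suc j"])
qed

lemma pow_null: "(f :: nat \<Rightarrow> real) \<longlonglongrightarrow> 0 \<Longrightarrow> p \<ge> 1 \<Longrightarrow> (\<lambda>s. f s ^ p) \<longlonglongrightarrow> 0"
  using tendsto_power[of f 0 sequentially p] by simp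

lemma part_b_path:
  fixes k E :: "nat \<Rightarrow> real"
  assumes k: "sv k" and E: "Bseq E"
  shows "(\<lambda>t. (1 / real t) * (\<Sum>s = 1..t. (k s)\<^sup>2 * E s) - (1 / real t) * (\<Sum>s = i + 1..t. (k (s - i))\<^sup>2 * E s)) \<longlonglongrightarrow> 0"
proof -
  define c where "c s = (k s)\<^sup>2 * E s - (if i + 1 \<le> s then (k (s - i))\<^sup>2 * E s else 0)" for s
  have eq: "(\<Sum>s = i + 1..t. (k (s - i))\<^sup>2 * E s) = (\<Sum>s = 1..t. (if i + 1 \<le> s then (k (s - i))\<^sup>2 * E s else 0))" for t
  proof -
    have "{s \<in> {1..t}. i + 1 \<le> s} = {i + 1..t}" by auto
    then show ?thesis using sum.inter_filter[of "{1..t}" "\<lambda>s. (k (s - i))\<^sup>2 * E s" "\<lambda>s. i + 1 \<le> s"] by simp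
  qed
  have c0: "c \<longlonglongrightarrow> 0"
  proof -
    have d: "(\<lambda>s. k s - k (s - i)) \<longlonglongrightarrow> 0" by (rule sv_diff_shift[OF k])
    have bk: "Bseq k" using k by (rule sv_Bseq)
    have bk2: "Bseq (\<lambda>s. k (s - i))" using sv_Bseq[OF sv_shift[OF k]] .
    have "Bseq (\<lambda>s. E s * (k s + k (s - i)))"
      using Bseq_mult[OF E Bseq_add2[OF bk bk2]] by simp
    from bseq_null_mult[OF this d]
    have "(\<lambda>s. E s * (k s + k (s - i)) * (k s - k (s - i))) \<longlonglongrightarrow> 0" .
    then show ?thesis
      by (rule Lim_transform_eventually)
         (auto simp: eventually_sequentially c_def power2_eq_square algebra_simps intro!: exI[of _ "Suc i"])
  qed
  have "(\<lambda>t. (1 / real t) * (\<Sum>s = 1..t. c s)) \<longlonglongrightarrow> 0" by (rule cesaro[OF c0])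
  moreover have "(\<lambda>t. (1 / real t) * (\<Sum>s = 1..t. (k s)\<^sup>2 * E s) - (1 / real t) * (\<Sum>s = i + 1..t. (k (s - i))\<^sup>2 * E s))
     = (\<lambda>t. (1 / real t) * (\<Sum>s = 1..t. c s))"
    by (rule ext) (simp only: eq c_def sum_subtractf right_diff_distrib)
  ultimately show ?thesis by simp
qed

lemma part_c_path:
  fixes kj kl ea eb :: "nat \<Rightarrow> real"
  assumes kj: "sv kj" and kl: "sv kl" and ea: "Bseq ea" and eb: "Bseq eb"
    and mart: "(\<lambda>t. (1 / real t) * (\<Sum>s = m..t. kj (s - j) * kl (s - j) * ea s * eb s)) \<longlonglongrightarrow> 0"
  shows "(\<lambda>t. (1 / real t) * (\<Sum>s = m..t. kj s * ea s * kl s * eb s)) \<longlonglongrightarrow> 0"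
proof -
  define c where "c s = kj s * kl s" for s
  have c: "sv c" unfolding c_def by (intro sv_mult kj kl)
  have "(\<lambda>s. (ea s * eb s) * (c s - c (s - j))) \<longlonglongrightarrow> 0"
    by (intro bseq_null_mult Bseq_mult ea eb sv_diff_shift c)
  then have "(\<lambda>t. (1 / real t) * (\<Sum>s = m..t. (ea s * eb s) * (c s - c (s - j)))) \<longlonglongrightarrow> 0"
    by (rule cesaro)
  from tendsto_add[OF this mart]
  have "(\<lambda>t. (1 / real t) * ((\<Sum>s = m..t. (ea s * eb s) * (c s - c (s - j))) + (\<Sum>s = m..t. kj (s - j) * kl (s - j) * ea s * eb s))) \<longlonglongrightarrow> 0"
    by (simp add: distrib_left)
  moreover have "(\<Sum>s = m..t. (ea s * eb s) * (c s - c (s - j))) + (\<Sum>s = m..t. kj (s - j) * kl (s - j) * ea s * eb s)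
      = (\<Sum>s = m..t. kj s * ea s * kl s * eb s)" for t
    by (subst sum.distrib[symmetric]) (rule sum.cong, simp, simp add: c_def algebra_simps)
  ultimately show ?thesis by simp
qed

definition gens where "gens M y t = {y s -` A \<inter> space M | s A. s \<le> t \<and> A \<in> sets borel}"

lemma gens_Pow: "gens M y t \<subseteq> Pow (space M)" unfolding gens_def by auto

lemma nf_space[simp]: "space (nat_filt M y t) = space M"
  unfolding nat_filt_def by (simp add: space_measure_of_conv)

lemma nf_sets: "sets (nat_filt M y t) = sigma_sets (space M) (gens M y t)"
  unfolding nat_filt_def gens_def[symmetric] by (rule sets_measure_of[OF gens_Pow])

lemma nf_subalg:
  assumes y: "\<And>t. y t \<in> borel_measurable M"
  shows "subalgebra M (nat_filt M y t)"
proof -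
  have "gens M y t \<subseteq> sets M" unfolding gens_def using y by (auto intro: measurable_sets)
  then have "sigma_sets (space M) (gens M y t) \<subseteq> sets M" by (rule sets.sigma_sets_subset)
  then show ?thesis unfolding subalgebra_def nf_sets by simp
qed

lemma nf_mono:
  assumes "s \<le> t" "f \<in> borel_measurable (nat_filt M y s)"
  shows "f \<in> borel_measurable (nat_filt M y t)"
proof -
  have "gens M y s \<subseteq> gens M y t" unfolding gens_def using assms(1) by fastforce
  then have "sets (nat_filt M y s) \<subseteq> sets (nat_filt M y t)" unfolding nf_sets by (rule sigma_sets_mono')
  with assms(2) show ?thesis unfolding measurable_def by auto
qed

lemma nf_y:
  assumes "s \<le> t" shows "y s \<in> borel_measurable (nat_filt M y t)"
proof (rule measurableI)
  fix A :: "real set" assume "A \<in> sets borel"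
  then have "y s -` A \<inter> space M \<in> gens M y t" unfolding gens_def using assms by blast
  then show "y s -` A \<inter> space (nat_filt M y t) \<in> sets (nat_filt M y t)"
    unfolding nf_sets by auto
qed simp

lemma nf_sfs:
  assumes "prob_space M" "\<And>t. y t \<in> borel_measurable M"
  shows "sigma_finite_subalgebra M (nat_filt M y t)"
proof -
  interpret prob_space M by fact
  have "finite_measure_subalgebra M (nat_filt M y t)"
    unfolding finite_measure_subalgebra_def finite_measure_subalgebra_axioms_def
    using nf_subalg[OF assms(2)] finite_measure_axioms by simp
  then show ?thesis by (rule finite_measure_subalgebra_is_sigma_finite)
qed

context prob_space begin

lemma orth:
  fixes h f :: "'a \<Rightarrow> real"
  assumes sfs: "sigma_finite_subalgebra M F"
    and h: "h \<in> borel_measurable F" "\<And>x. x \<in> space M \<Longrightarrow> \<bar>h x\<bar> \<le> B"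
    and f: "f \<in> borel_measurable M" "AE x in M. \<bar>f x\<bar> \<le> Bf"
    and ce: "AE x in M. real_cond_exp M F f x = c"
  shows "integral\<^sup>L M (\<lambda>x. h x * f x) = c * integral\<^sup>L M h"
proof -
  have hM: "h \<in> borel_measurable M"
    using measurable_from_subalg[OF sigma_finite_subalgebra.subalg[OF sfs] h(1)] .
  have B0: "\<And>x. x \<in> space M \<Longrightarrow> 0 \<le> B" using h(2) by (meson abs_ge_zero order_trans)
  have "AE x in M. norm (h x * f x) \<le> B * Bf"
    using f(2) AE_space
  proof eventually_elim
    case (elim x)
    then show ?case using h(2)[of x] B0[of x] by (auto simp: abs_mult intro!: mult_mono)
  qed
  then have int: "integrable M (\<lambda>x. h x * f x)"
    by (rule integrable_const_bound) (use hM f(1) in measurable)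
  have "integral\<^sup>L M (\<lambda>x. h x * f x) = integral\<^sup>L M (\<lambda>x. h x * real_cond_exp M F f x)"
    using sigma_finite_subalgebra.real_cond_exp_intg(2)[OF sfs int h(1) f(1)] by simp
  also have "\<dots> = integral\<^sup>L M (\<lambda>x. h x * c)"
    by (rule integral_cong_AE) (use hM in measurable, use ce in auto)
  also have "\<dots> = c * integral\<^sup>L M h" by simp
  finally show ?thesis .
qed

lemma filt_slln:
  fixes F :: "int \<Rightarrow> 'a measure" and \<tau> :: "nat \<Rightarrow> int" and \<zeta> :: "int \<Rightarrow> 'a \<Rightarrow> real" and g :: "nat \<Rightarrow> 'a \<Rightarrow> real"
  assumes F: "\<And>t. subalgebra M (F t)"
    and Fmono: "\<And>s t (f :: 'a \<Rightarrow> real). s \<le> t \<Longrightarrow> f \<in> borel_measurable (F s) \<Longrightarrow> f \<in> borel_measurable (F t)"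
    and tau: "\<And>u n. u < n \<Longrightarrow> \<tau> u < \<tau> n"
    and zm: "\<And>t. \<zeta> t \<in> borel_measurable (F t)"
    and zb: "\<And>t x. x \<in> space M \<Longrightarrow> \<bar>\<zeta> t x\<bar> \<le> B"
    and zo: "\<And>t h Bh. h \<in> borel_measurable (F (t - 1)) \<Longrightarrow> (\<And>x. x \<in> space M \<Longrightarrow> \<bar>h x\<bar> \<le> Bh)
              \<Longrightarrow> integral\<^sup>L M (\<lambda>x. h x * \<zeta> t x) = 0"
    and gm: "\<And>n. g n \<in> borel_measurable (F (\<tau> n - 1))"
    and gb: "\<And>n x. x \<in> space M \<Longrightarrow> \<bar>g n x\<bar> \<le> Bg"
  shows "AE x in M. (\<lambda>n. (\<Sum>u<n. g u x * \<zeta> (\<tau> u) x) / real n) \<longlonglongrightarrow> 0"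
proof -
  define \<xi> where "\<xi> u x = g u x * \<zeta> (\<tau> u) x" for u x
  have gF: "g u \<in> borel_measurable (F (\<tau> u))" for u
    using Fmono[of "\<tau> u - 1" "\<tau> u" "g u"] gm[of u] by simp
  have xF: "\<xi> u \<in> borel_measurable (F (\<tau> u))" for u
    unfolding \<xi>_def by (intro borel_measurable_times gF zm)
  have xFn: "\<xi> u \<in> borel_measurable (F (\<tau> n - 1))" if "u < n" for u n
    using tau[OF that] Fmono[of "\<tau> u" "\<tau> n - 1" "\<xi> u"] xF[of u] by simp
  have SF: "(\<lambda>x. \<Sum>u<n. \<xi> u x) \<in> borel_measurable (F (\<tau> n - 1))" for n
    by (intro borel_measurable_sum xFn) simp
  have xM: "\<xi> u \<in> borel_measurable M" for u by (rule measurable_from_subalg[OF F xF])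
  have xb: "\<bar>\<xi> u x\<bar> \<le> Bg * B" if "x \<in> space M" for u x
  proof -
    have "0 \<le> Bg" using gb[OF that, of u] by linarith
    then show ?thesis unfolding \<xi>_def abs_mult by (intro mult_mono gb zb that) auto
  qed
  have Sb: "\<bar>\<Sum>u<n. \<xi> u x\<bar> \<le> real n * (Bg * B)" if "x \<in> space M" for n x
  proof -
    have "\<bar>\<Sum>u<n. \<xi> u x\<bar> \<le> (\<Sum>u<n. \<bar>\<xi> u x\<bar>)" by (rule sum_abs)
    also have "\<dots> \<le> (\<Sum>u<n. Bg * B)" by (intro sum_mono xb that)
    finally show ?thesis by simp
  qed
  obtain x0 where x0: "x0 \<in> space M" using not_empty by blast
  have BB: "0 \<le> Bg * B" using xb[OF x0, of 0] by linarith
  have ok: "integral\<^sup>L M (\<lambda>x. (\<Sum>u<n. \<xi> u x) ^ k * \<xi> n x) = 0" for n k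
  proof -
    have "integral\<^sup>L M (\<lambda>x. ((\<Sum>u<n. \<xi> u x) ^ k * g n x) * \<zeta> (\<tau> n) x) = 0"
    proof (rule zo)
      show "(\<lambda>x. (\<Sum>u<n. \<xi> u x) ^ k * g n x) \<in> borel_measurable (F (\<tau> n - 1))"
        by (intro borel_measurable_times borel_measurable_power SF gm)
      fix x assume x: "x \<in> space M"
      have "\<bar>(\<Sum>u<n. \<xi> u x) ^ k * g n x\<bar> = \<bar>\<Sum>u<n. \<xi> u x\<bar> ^ k * \<bar>g n x\<bar>" by (simp add: abs_mult power_abs)
      also have "\<dots> \<le> (real n * (Bg * B)) ^ k * Bg"
        by (intro mult_mono power_mono Sb gb x) (auto simp: BB)
      finally show "\<bar>(\<Sum>u<n. \<xi> u x) ^ k * g n x\<bar> \<le> (real n * (Bg * B)) ^ k * Bg" .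
    qed
    then show ?thesis unfolding \<xi>_def by (simp add: mult.assoc)
  qed
  have "AE x in M. (\<lambda>n. (\<Sum>u<n. \<xi> u x) / real n) \<longlonglongrightarrow> 0"
    by (rule mds_slln[OF xM xb]) (use ok[of _ 1] ok[of _ 3] in auto)
  then show ?thesis unfolding \<xi>_def .
qed

end

lemma alg_meas:
  fixes y :: "int \<Rightarrow> 'a \<Rightarrow> real"
  shows "(\<lambda>x. alg_theta \<beta> (\<lambda>n. y (int n) x) t) \<in> borel_measurable (nat_filt M y (int t)) \<and>
         (\<lambda>x. alg_e \<beta> (\<lambda>n. y (int n) x) t) \<in> borel_measurable (nat_filt M y (int t)) \<and>
         (\<lambda>x. alg_x \<beta> (\<lambda>n. y (int n) x) t) \<in> borel_measurable (nat_filt M y (int t)) \<and>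
         (\<lambda>x. alg_phi \<beta> (\<lambda>n. y (int n) x) t) \<in> borel_measurable (nat_filt M y (int t)) \<and>
         (\<lambda>x. alg_S \<beta> (\<lambda>n. y (int n) x) t) \<in> borel_measurable (nat_filt M y (int t))"
proof (induction t rule: nat_less_induct)
  case (1 t)
  consider "t = 0" | "t = Suc 0" | n where "t = Suc (Suc n)" by (metis not0_implies_Suc)
  then show ?case
  proof cases
    case 1 then show ?thesis by (simp add: alg_0)
  next
    case 2
    have "y 1 \<in> borel_measurable (nat_filt M y (int t))" using 2 by (intro nf_y) simp
    then show ?thesis using 2 by (simp add: alg_1)
  next
    case 3
    let ?F = "nat_filt M y (int (Suc (Suc n)))"
    have IH: "(\<lambda>x. alg_theta \<beta> (\<lambda>n. y (int n) x) (Suc n)) \<in> borel_measurable (nat_filt M y (int (Suc n)))"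
      "(\<lambda>x. alg_e \<beta> (\<lambda>n. y (int n) x) (Suc n)) \<in> borel_measurable (nat_filt M y (int (Suc n)))"
      "(\<lambda>x. alg_x \<beta> (\<lambda>n. y (int n) x) (Suc n)) \<in> borel_measurable (nat_filt M y (int (Suc n)))"
      "(\<lambda>x. alg_phi \<beta> (\<lambda>n. y (int n) x) (Suc n)) \<in> borel_measurable (nat_filt M y (int (Suc n)))"
      "(\<lambda>x. alg_S \<beta> (\<lambda>n. y (int n) x) (Suc n)) \<in> borel_measurable (nat_filt M y (int (Suc n)))"
      using 1 3 by auto
    have le: "int (Suc n) \<le> int (Suc (Suc n))" by simp
    note m = nf_mono[OF le IH(1)] nf_mono[OF le IH(2)] nf_mono[OF le IH(3)] nf_mono[OF le IH(4)] nf_mono[OF le IH(5)]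
    have my: "y (int (Suc (Suc n))) \<in> borel_measurable ?F" by (rule nf_y) simp
    have mS: "(\<lambda>x. alg_S \<beta> (\<lambda>n. y (int n) x) (Suc (Suc n))) \<in> borel_measurable ?F"
      unfolding alg_SS using m by measurable
    have me: "(\<lambda>x. alg_e \<beta> (\<lambda>n. y (int n) x) (Suc (Suc n))) \<in> borel_measurable ?F"
      unfolding alg_SS using m my by measurable
    have mx: "(\<lambda>x. alg_x \<beta> (\<lambda>n. y (int n) x) (Suc (Suc n))) \<in> borel_measurable ?F"
      unfolding alg_SS using m my by measurable
    have mp: "(\<lambda>x. alg_phi \<beta> (\<lambda>n. y (int n) x) (Suc (Suc n))) \<in> borel_measurable ?F"
      unfolding alg_SS(4) using m mx by measurable
    have mt: "(\<lambda>x. alg_theta \<beta> (\<lambda>n. y (int n) x) (Suc (Suc n))) \<in> borel_measurable ?F"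
      unfolding alg_SS(1) using m mS me by measurable
    show ?thesis unfolding 3 using mS me mx mp mt by simp
  qed
qed

lemma alg_theta_meas: "(\<lambda>x. alg_theta \<beta> (\<lambda>n. y (int n) x) t) \<in> borel_measurable (nat_filt M y (int t))"
  using alg_meas by blast
lemma alg_phi_meas: "(\<lambda>x. alg_phi \<beta> (\<lambda>n. y (int n) x) t) \<in> borel_measurable (nat_filt M y (int t))"
  using alg_meas by blast
lemma alg_x_meas: "(\<lambda>x. alg_x \<beta> (\<lambda>n. y (int n) x) t) \<in> borel_measurable (nat_filt M y (int t))"
  using alg_meas by blast

lemma kphi_meas:
  fixes y :: "int \<Rightarrow> 'a \<Rightarrow> real"
  shows "(\<lambda>x. kappa_phi \<kappa> \<beta> (alg_theta \<beta> (\<lambda>n. y (int n) x)) t j) \<in> borel_measurable (nat_filt M y (int t - 1))"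
proof (induction t arbitrary: j rule: nat_less_induct)
  case (1 t)
  consider "t = 0" | "t = Suc 0" | n where "t = Suc (Suc n)" by (metis not0_implies_Suc)
  then show ?case
  proof cases
    case 1 then show ?thesis by simp
  next
    case 2 then show ?thesis by simp
  next
    case 3
    let ?F = "nat_filt M y (int t - 1)"
    have th: "(\<lambda>x. alg_theta \<beta> (\<lambda>n. y (int n) x) (t - i)) \<in> borel_measurable ?F" if "i \<ge> 1" for i
      using that 3 by (intro nf_mono[OF _ alg_theta_meas]) auto
    have kx: "(\<lambda>x. kappa_x \<kappa> \<beta> (alg_theta \<beta> (\<lambda>n. y (int n) x)) t j) \<in> borel_measurable ?F"
      unfolding kappa_x_def
      by (intro borel_measurable_sum borel_measurable_times borel_measurable_prod borel_measurable_const th) auto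
    have ih: "(\<lambda>x. kappa_phi \<kappa> \<beta> (alg_theta \<beta> (\<lambda>n. y (int n) x)) (Suc n) (j - 1)) \<in> borel_measurable ?F"
      using 1 3 by (intro nf_mono[OF _ "1.IH"[rule_format]]) auto
    have th1: "(\<lambda>x. alg_theta \<beta> (\<lambda>n. y (int n) x) (Suc n)) \<in> borel_measurable ?F"
      using th[of 1] 3 by simp
    show ?thesis unfolding 3 kappa_phi.simps(3)
      using kx ih th1 unfolding 3 by measurable
  qed
qed

definition clampr :: "real \<Rightarrow> real \<Rightarrow> real" where
  "clampr B z = max (- B) (min B z)"

lemma clampr_abs: "0 \<le> B \<Longrightarrow> \<bar>clampr B z\<bar> \<le> B" unfolding clampr_def by auto
lemma clampr_id: "\<bar>z\<bar> \<le> B \<Longrightarrow> clampr B z = z" unfolding clampr_def by auto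
lemma clampr_meas[measurable]: "f \<in> borel_measurable N \<Longrightarrow> (\<lambda>x. clampr B (f x)) \<in> borel_measurable N"
  unfolding clampr_def by (intro borel_measurable_max borel_measurable_min measurable_const) auto

locale L4 =
  fixes M :: "'a measure"
    and y \<epsilon> :: "int \<Rightarrow> 'a \<Rightarrow> real"
    and \<kappa> :: "nat \<Rightarrow> real"
    and \<sigma>2 K \<beta> :: real
    and kstar :: "'a \<Rightarrow> nat" and Kstar :: "'a \<Rightarrow> real"
  assumes prob: "prob_space M"
    and y_rv: "\<And>t. y t \<in> borel_measurable M"
    and D1: "measure M {x \<in> space M. (y 1 x)\<^sup>2 > 0} = 1"
    and D2_k0: "\<kappa> 0 = 1"
    and D2_abs: "summable (\<lambda>s. \<bar>\<kappa> s\<bar>)"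
    and D2_rep: "AE x in M. \<forall>t. (\<lambda>s. \<kappa> s * \<epsilon> (t - int s) x) sums y t x"
    and mds_meas: "\<And>t. \<epsilon> t \<in> borel_measurable (nat_filt M y t)"
    and mds: "\<And>t. AE x in M. real_cond_exp M (nat_filt M y (t - 1)) (\<epsilon> t) x = 0"
    and D3: "\<And>t. AE x in M. real_cond_exp M (nat_filt M y (t - 1)) (\<lambda>x. (\<epsilon> t x)\<^sup>2) x = \<sigma>2"
    and D4: "AE x in M. \<forall>t. \<bar>\<epsilon> t x\<bar> \<le> K"
    and beta: "0 \<le> \<beta>" "\<beta> \<le> 1"
    and Kstar_bd: "AE x in M. 0 < Kstar x \<and> Kstar x < 1"
    and theta_bd: "AE x in M. \<forall>t\<ge>1.
        \<bar>alg_theta \<beta> (\<lambda>n. y (int n) x) (t + kstar x)\<bar> \<le> Kstar x"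
begin

interpretation P: prob_space M by (rule prob)

abbreviation "F \<equiv> nat_filt M y"

lemma F_subalg: "subalgebra M (F t)" by (rule nf_subalg[OF y_rv])
lemma F_sfs: "sigma_finite_subalgebra M (F t)" by (rule nf_sfs[OF prob y_rv])
lemma F_mono: "s \<le> t \<Longrightarrow> (f :: 'a \<Rightarrow> real) \<in> borel_measurable (F s) \<Longrightarrow> f \<in> borel_measurable (F t)"
  by (rule nf_mono)

lemma eps_M[measurable]: "\<epsilon> t \<in> borel_measurable M"
  by (rule measurable_from_subalg[OF F_subalg mds_meas])

definition "eK t x = clampr \<bar>K\<bar> (\<epsilon> t x)"

lemma eK_F: "eK t \<in> borel_measurable (F t)"
  unfolding eK_def using mds_meas[of t] by measurable
lemma eK_b: "\<bar>eK t x\<bar> \<le> \<bar>K\<bar>" unfolding eK_def by (rule clampr_abs) simp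
lemma eK_AE: "AE x in M. \<forall>t. eK t x = \<epsilon> t x"
  using D4
proof eventually_elim
  case (elim x)
  show ?case
  proof
    fix t
    have "\<bar>\<epsilon> t x\<bar> \<le> \<bar>K\<bar>" using elim[rule_format, of t] by (meson abs_ge_self order_trans)
    then show "eK t x = \<epsilon> t x" unfolding eK_def by (rule clampr_id)
  qed
qed
lemma eK_M[measurable]: "eK t \<in> borel_measurable M"
  by (rule measurable_from_subalg[OF F_subalg eK_F])

lemma orth_eps:
  assumes h: "h \<in> borel_measurable (F (t - 1))" "\<And>x. x \<in> space M \<Longrightarrow> \<bar>h x\<bar> \<le> Bh"
  shows "integral\<^sup>L M (\<lambda>x. h x * eK t x) = 0"
proof -
  have hM[measurable]: "h \<in> borel_measurable M" by (rule measurable_from_subalg[OF F_subalg h(1)])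
  have "integral\<^sup>L M (\<lambda>x. h x * eK t x) = integral\<^sup>L M (\<lambda>x. h x * \<epsilon> t x)"
    by (rule integral_cong_AE) (measurable, use eK_AE in auto)
  also have "\<dots> = 0 * integral\<^sup>L M h"
    by (rule P.orth[OF F_sfs h eps_M _ mds]) (use D4 in auto)
  finally show ?thesis by simp
qed

lemma int_sq: "integral\<^sup>L M (\<lambda>x. h x * (\<epsilon> t x)\<^sup>2) = \<sigma>2 * integral\<^sup>L M h"
  if h: "h \<in> borel_measurable (F (t - 1))" "\<And>x. x \<in> space M \<Longrightarrow> \<bar>h x\<bar> \<le> Bh" for h t Bh
proof (rule P.orth[OF F_sfs h _ _ D3])
  show "(\<lambda>x. (\<epsilon> t x)\<^sup>2) \<in> borel_measurable M" by measurable
  show "AE x in M. \<bar>(\<epsilon> t x)\<^sup>2\<bar> \<le> K\<^sup>2" using D4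
  proof eventually_elim
    case (elim x)
    have hh: "\<bar>\<epsilon> t x\<bar> \<le> K" using elim by blast
    show ?case using pow_bnd'[OF hh, of 2] by simp
  qed
qed

lemma orth_sq:
  assumes h: "h \<in> borel_measurable (F (t - 1))" "\<And>x. x \<in> space M \<Longrightarrow> \<bar>h x\<bar> \<le> Bh"
  shows "integral\<^sup>L M (\<lambda>x. h x * ((eK t x)\<^sup>2 - \<sigma>2)) = 0"
proof -
  have hM[measurable]: "h \<in> borel_measurable M" by (rule measurable_from_subalg[OF F_subalg h(1)])
  have ih: "integrable M h" by (rule P.intb[OF hM h(2)])
  have ih2: "integrable M (\<lambda>x. h x * (eK t x)\<^sup>2)"
  proof (rule P.intb[where B = "Bh * K\<^sup>2"])
    show "(\<lambda>x. h x * (eK t x)\<^sup>2) \<in> borel_measurable M" by measurable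
    fix x assume x: "x \<in> space M"
    have "\<bar>h x * (eK t x)\<^sup>2\<bar> = \<bar>h x\<bar> * \<bar>eK t x\<bar>\<^sup>2" by (simp add: abs_mult)
    also have "\<dots> \<le> Bh * \<bar>K\<bar>\<^sup>2"
      using h(2)[OF x] eK_b[of t x] by (intro mult_mono power_mono) auto
    finally show "\<bar>h x * (eK t x)\<^sup>2\<bar> \<le> Bh * K\<^sup>2" by simp
  qed
  have "integral\<^sup>L M (\<lambda>x. h x * ((eK t x)\<^sup>2 - \<sigma>2)) = integral\<^sup>L M (\<lambda>x. h x * (eK t x)\<^sup>2) - \<sigma>2 * integral\<^sup>L M h"
    using ih ih2 by (simp add: right_diff_distrib)
  also have "integral\<^sup>L M (\<lambda>x. h x * (eK t x)\<^sup>2) = integral\<^sup>L M (\<lambda>x. h x * (\<epsilon> t x)\<^sup>2)"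
    by (rule integral_cong_AE) (measurable, use eK_AE in auto)
  also have "\<dots> = \<sigma>2 * integral\<^sup>L M h" by (rule int_sq[OF h])
  finally show ?thesis by simp
qed

lemma sigma_pos: "\<sigma>2 > 0"
proof (rule ccontr)
  assume "\<not> \<sigma>2 > 0"
  then have s0: "\<sigma>2 \<le> 0" by simp
  have "AE x in M. (\<epsilon> t x)\<^sup>2 = 0" for t
  proof -
    have i1: "integral\<^sup>L M (\<lambda>x. 1 * (\<epsilon> t x)\<^sup>2) = \<sigma>2 * integral\<^sup>L M (\<lambda>x. 1)"
      by (rule int_sq[where Bh = 1]) auto
    have int: "integrable M (\<lambda>x. (\<epsilon> t x)\<^sup>2)"
    proof (rule P.integrable_const_bound[where B = "K\<^sup>2"])
      show "AE x in M. norm ((\<epsilon> t x)\<^sup>2) \<le> K\<^sup>2" using D4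
      proof eventually_elim
        case (elim x)
        have hh: "\<bar>\<epsilon> t x\<bar> \<le> K" using elim by blast
        show ?case using pow_bnd'[OF hh, of 2] by simp
      qed
    qed measurable
    have "integral\<^sup>L M (\<lambda>x. (\<epsilon> t x)\<^sup>2) \<le> 0" using i1 s0 by (simp add: P.prob_space)
    moreover have "integral\<^sup>L M (\<lambda>x. (\<epsilon> t x)\<^sup>2) \<ge> 0" by simp
    ultimately have "integral\<^sup>L M (\<lambda>x. (\<epsilon> t x)\<^sup>2) = 0" by simp
    then show ?thesis using integral_nonneg_eq_0_iff_AE[OF int] by simp
  qed
  then have "AE x in M. \<forall>t. (\<epsilon> t x)\<^sup>2 = 0" by (subst AE_all_countable) auto
  then have "AE x in M. y 1 x = 0" using D2_rep
  proof eventually_elim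
    case (elim x)
    then have "(\<lambda>s. \<kappa> s * \<epsilon> (1 - int s) x) = (\<lambda>s. 0)" by auto
    then have "(\<lambda>s. 0::real) sums y 1 x" using elim(2) by metis
    then show ?case using sums_unique sums_zero by metis
  qed
  then have "AE x in M. x \<notin> {x \<in> space M. (y 1 x)\<^sup>2 > 0}" by eventually_elim auto
  moreover have "{x \<in> space M. (y 1 x)\<^sup>2 > 0} \<in> sets M" using y_rv[of 1] by measurable
  ultimately have "{x \<in> space M. (y 1 x)\<^sup>2 > 0} \<in> null_sets M" by (simp add: AE_iff_null_sets)
  then have "measure M {x \<in> space M. (y 1 x)\<^sup>2 > 0} = 0" by (simp add: measure_eq_0_null_sets)
  then show False using D1 by simp
qed

end

lemma sum_skip0: fixes n :: nat shows "(\<Sum>u<n. (if u = 0 then 0 else f u)) = (\<Sum>u=1..<n. (f u :: real))"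
proof (induction n)
  case 0 then show ?case by simp
next
  case (Suc n)
  show ?case
  proof (cases n)
    case 0 then show ?thesis by simp
  next
    case (Suc m)
    then show ?thesis using Suc.IH by (simp add: sum.atLeastLessThan_Suc)
  qed
qed

context L4 begin

interpretation P: prob_space M by (rule prob)

definition "Wf u x = suminf (\<lambda>k. \<kappa> (Suc k) * \<epsilon> (int u - 1 - int k) x)"
definition "Gf u x = alg_phi \<beta> (\<lambda>n. y (int n) x) u - y (int u) x + Wf u x"

lemma W_meas: "Wf u \<in> borel_measurable (F (int u - 1))"
proof -
  have "(\<lambda>x. \<epsilon> (int u - 1 - int k) x) \<in> borel_measurable (F (int u - 1))" for k
    by (rule F_mono[OF _ mds_meas]) simp
  then show ?thesis unfolding Wf_def[abs_def]
    by (intro borel_measurable_suminf borel_measurable_times borel_measurable_const)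
qed

lemma phiy_meas: "u \<ge> 1 \<Longrightarrow> (\<lambda>x. alg_phi \<beta> (\<lambda>n. y (int n) x) u - y (int u) x) \<in> borel_measurable (F (int u - 1))"
proof -
  assume "u \<ge> 1"
  then consider "u = 1" | m where "u = Suc (Suc m)" by (metis One_nat_def Suc_le_D not0_implies_Suc less_eq_Suc_le)
  then show ?thesis
  proof cases
    case 1 then show ?thesis by (simp add: alg_1)
  next
    case 2
    have e: "alg_phi \<beta> (\<lambda>n. y (int n) x) u - y (int u) x =
      - \<beta> * alg_theta \<beta> (\<lambda>n. y (int n) x) (Suc m) * alg_x \<beta> (\<lambda>n. y (int n) x) (Suc m)
      - alg_theta \<beta> (\<lambda>n. y (int n) x) (Suc m) * alg_phi \<beta> (\<lambda>n. y (int n) x) (Suc m)" for x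
      unfolding 2 alg_SS by simp
    have i: "int (Suc m) = int u - 1" using 2 by simp
    show ?thesis unfolding e
      using alg_theta_meas[of \<beta> y "Suc m" M] alg_x_meas[of \<beta> y "Suc m" M] alg_phi_meas[of \<beta> y "Suc m" M]
      unfolding i by measurable
  qed
qed

lemma G_meas: "u \<ge> 1 \<Longrightarrow> Gf u \<in> borel_measurable (F (int u - 1))"
  unfolding Gf_def[abs_def] using phiy_meas W_meas by (intro borel_measurable_add) auto

lemma G_path:
  assumes u: "u \<ge> 1" and s: "(\<lambda>s. \<kappa> s * \<epsilon> (int u - int s) x) sums y (int u) x"
  shows "alg_phi \<beta> (\<lambda>n. y (int n) x) u = \<epsilon> (int u) x + Gf u x"
proof -
  have "(\<lambda>k. \<kappa> (Suc k) * \<epsilon> (int u - int (Suc k)) x) sums (y (int u) x - \<kappa> 0 * \<epsilon> (int u - int 0) x)"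
    using s by (subst sums_Suc_iff) simp
  moreover have "(\<lambda>k. \<kappa> (Suc k) * \<epsilon> (int u - int (Suc k)) x) = (\<lambda>k. \<kappa> (Suc k) * \<epsilon> (int u - 1 - int k) x)"
    by (rule ext) (simp add: algebra_simps)
  ultimately have "(\<lambda>k. \<kappa> (Suc k) * \<epsilon> (int u - 1 - int k) x) sums (y (int u) x - \<epsilon> (int u) x)"
    using D2_k0 by (simp only:) simp
  then have "Wf u x = y (int u) x - \<epsilon> (int u) x" unfolding Wf_def by (rule sums_unique[symmetric])
  then show ?thesis unfolding Gf_def by simp
qed

definition "s1 x \<longleftrightarrow> (\<lambda>n. (\<Sum>u<n. (if u = 0 then 0 else 1) * ((eK (int u) x)\<^sup>2 - \<sigma>2)) / real n) \<longlonglongrightarrow> 0"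
definition "s2 x \<longleftrightarrow> (\<forall>m::nat. (\<lambda>n. (\<Sum>u<n. (if u = 0 then 0 else clampr (real m) (Gf u x)) * eK (int u) x) / real n) \<longlonglongrightarrow> 0)"

lemma slln1: "AE x in M. s1 x"
proof -
  have "AE x in M. (\<lambda>n. (\<Sum>u<n. (\<lambda>x. if u = 0 then 0 else 1) x * (\<lambda>t x. (eK t x)\<^sup>2 - \<sigma>2) (int u) x) / real n) \<longlonglongrightarrow> 0"
  proof (rule P.filt_slln[where F = F and B = "K\<^sup>2 + \<bar>\<sigma>2\<bar>" and Bg = 1])
    show "subalgebra M (F t)" for t by (rule F_subalg)
    show "s \<le> t \<Longrightarrow> f \<in> borel_measurable (F s) \<Longrightarrow> f \<in> borel_measurable (F t)" for s t and f :: "'a \<Rightarrow> real"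
      by (rule F_mono)
    show "\<And>u n. u < n \<Longrightarrow> int u < int n" by simp
    show "(\<lambda>x. (eK t x)\<^sup>2 - \<sigma>2) \<in> borel_measurable (F t)" for t using eK_F[of t] by measurable
    show "\<bar>(eK t x)\<^sup>2 - \<sigma>2\<bar> \<le> K\<^sup>2 + \<bar>\<sigma>2\<bar>" for t x
    proof -
      have "(eK t x)\<^sup>2 \<le> \<bar>K\<bar>\<^sup>2" using pow_bnd'[OF eK_b[of t x], of 2] by simp
      moreover have "0 \<le> (eK t x)\<^sup>2" by simp
      moreover have "0 \<le> K\<^sup>2" by simp
      ultimately show ?thesis unfolding abs_le_iff using abs_ge_self[of \<sigma>2] abs_ge_minus_self[of \<sigma>2] power2_abs[of K] by linarith
    qed
    show "integral\<^sup>L M (\<lambda>x. h x * ((eK t x)\<^sup>2 - \<sigma>2)) = 0"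
      if "h \<in> borel_measurable (F (t - 1))" "\<And>x. x \<in> space M \<Longrightarrow> \<bar>h x\<bar> \<le> Bh" for t h Bh
      by (rule orth_sq[OF that])
    show "(\<lambda>x. if u = 0 then 0 else 1 :: real) \<in> borel_measurable (F (int u - 1))" for u by simp
    show "\<bar>if u = 0 then 0 else 1 :: real\<bar> \<le> 1" for u by simp
  qed
  then show ?thesis unfolding s1_def by simp
qed

lemma slln2: "AE x in M. s2 x"
proof -
  have "AE x in M. (\<lambda>n. (\<Sum>u<n. (\<lambda>x. if u = 0 then 0 else clampr (real m) (Gf u x)) x * eK (int u) x) / real n) \<longlonglongrightarrow> 0" for m :: nat
  proof (rule P.filt_slln[where F = F and B = "\<bar>K\<bar>" and Bg = "real m"])
    show "subalgebra M (F t)" for t by (rule F_subalg)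
    show "s \<le> t \<Longrightarrow> f \<in> borel_measurable (F s) \<Longrightarrow> f \<in> borel_measurable (F t)" for s t and f :: "'a \<Rightarrow> real"
      by (rule F_mono)
    show "\<And>u n. u < n \<Longrightarrow> int u < int n" by simp
    show "eK t \<in> borel_measurable (F t)" for t by (rule eK_F)
    show "\<bar>eK t x\<bar> \<le> \<bar>K\<bar>" for t x by (rule eK_b)
    show "integral\<^sup>L M (\<lambda>x. h x * eK t x) = 0"
      if "h \<in> borel_measurable (F (t - 1))" "\<And>x. x \<in> space M \<Longrightarrow> \<bar>h x\<bar> \<le> Bh" for t h Bh
      by (rule orth_eps[OF that])
    show "(\<lambda>x. if u = 0 then 0 else clampr (real m) (Gf u x)) \<in> borel_measurable (F (int u - 1))" for u
    proof (cases "u = 0")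
      case True then show ?thesis by simp
    next
      case False
      then have "Gf u \<in> borel_measurable (F (int u - 1))" by (intro G_meas) simp
      then have "(\<lambda>x. clampr (real m) (Gf u x)) \<in> borel_measurable (F (int u - 1))" by (rule clampr_meas)
      then show ?thesis using False by simp
    qed
    show "\<bar>if u = 0 then 0 else clampr (real m) (Gf u x)\<bar> \<le> real m" for u x
      by (auto intro: clampr_abs)
  qed
  then have "\<forall>m::nat. AE x in M. (\<lambda>n. (\<Sum>u<n. (if u = 0 then 0 else clampr (real m) (Gf u x)) * eK (int u) x) / real n) \<longlonglongrightarrow> 0"
    by simp
  then show ?thesis unfolding s2_def by (subst AE_all_countable) simp
qed

definition "good x \<longleftrightarrow> (\<forall>t. \<bar>\<epsilon> t x\<bar> \<le> K) \<and> (\<forall>t. (\<lambda>s. \<kappa> s * \<epsilon> (t - int s) x) sums y t x)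
   \<and> 0 < Kstar x \<and> Kstar x < 1 \<and> (\<forall>t\<ge>1. \<bar>alg_theta \<beta> (\<lambda>n. y (int n) x) (t + kstar x)\<bar> \<le> Kstar x)
   \<and> (\<forall>t. eK t x = \<epsilon> t x) \<and> s1 x \<and> s2 x"

lemma AE_good: "AE x in M. good x"
  using D4 D2_rep Kstar_bd theta_bd eK_AE slln1 slln2 unfolding good_def by eventually_elim auto

end

lemma alg_rec:
  assumes "n \<ge> 1"
  shows "alg_e \<beta> Y (Suc n) = Y (Suc n) - alg_theta \<beta> Y n * alg_e \<beta> Y n"
    "alg_x \<beta> Y (Suc n) = Y (Suc n) - \<beta> * alg_theta \<beta> Y n * alg_x \<beta> Y n"
    "alg_phi \<beta> Y (Suc n) = alg_x \<beta> Y (Suc n) - alg_theta \<beta> Y n * alg_phi \<beta> Y n"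
proof -
  obtain m where "n = Suc m" using assms by (cases n) auto
  then show "alg_e \<beta> Y (Suc n) = Y (Suc n) - alg_theta \<beta> Y n * alg_e \<beta> Y n"
    "alg_x \<beta> Y (Suc n) = Y (Suc n) - \<beta> * alg_theta \<beta> Y n * alg_x \<beta> Y n"
    "alg_phi \<beta> Y (Suc n) = alg_x \<beta> Y (Suc n) - alg_theta \<beta> Y n * alg_phi \<beta> Y n"
    by (simp_all add: alg_SS)
qed

lemma abs_rec: "\<bar>a - b * c\<bar> \<le> A \<Longrightarrow> \<bar>a\<bar> \<le> A \<Longrightarrow> \<bar>b\<bar> \<le> k \<Longrightarrow> \<bar>(a::real) - b * c\<bar> \<le> A + k * \<bar>c\<bar>"
proof -
  assume "\<bar>a\<bar> \<le> A" "\<bar>b\<bar> \<le> k"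
  have "\<bar>a - b * c\<bar> \<le> \<bar>a\<bar> + \<bar>b\<bar> * \<bar>c\<bar>" by (simp add: abs_mult[symmetric] abs_triangle_ineq4)
  also have "\<dots> \<le> A + k * \<bar>c\<bar>" using \<open>\<bar>a\<bar> \<le> A\<close> \<open>\<bar>b\<bar> \<le> k\<close> by (intro add_mono mult_right_mono) auto
  finally show ?thesis .
qed

lemma abs_rec2: "\<bar>a\<bar> \<le> A \<Longrightarrow> \<bar>b\<bar> \<le> k \<Longrightarrow> \<bar>(a::real) - b * c\<bar> \<le> A + k * \<bar>c\<bar>"
proof -
  assume "\<bar>a\<bar> \<le> A" "\<bar>b\<bar> \<le> k"
  have "\<bar>a - b * c\<bar> \<le> \<bar>a\<bar> + \<bar>b\<bar> * \<bar>c\<bar>" by (simp add: abs_mult[symmetric] abs_triangle_ineq4)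
  also have "\<dots> \<le> A + k * \<bar>c\<bar>" using \<open>\<bar>a\<bar> \<le> A\<close> \<open>\<bar>b\<bar> \<le> k\<close> by (intro add_mono mult_right_mono) auto
  finally show ?thesis .
qed

context L4 begin

interpretation P: prob_space M by (rule prob)

lemma y_bnd:
  assumes g: "good x" shows "\<bar>y t x\<bar> \<le> K * suminf (\<lambda>s. \<bar>\<kappa> s\<bar>)"
proof -
  have sm: "(\<lambda>s. \<kappa> s * \<epsilon> (t - int s) x) sums y t x" and eb: "\<And>t. \<bar>\<epsilon> t x\<bar> \<le> K"
    using g unfolding good_def by auto
  have fb: "\<bar>\<kappa> s * \<epsilon> (t - int s) x\<bar> \<le> \<bar>\<kappa> s\<bar> * K" for s
    unfolding abs_mult by (intro mult_left_mono eb) auto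
  have sg: "summable (\<lambda>s. \<bar>\<kappa> s\<bar> * K)" by (intro summable_mult2 D2_abs)
  have sa: "summable (\<lambda>s. \<bar>\<kappa> s * \<epsilon> (t - int s) x\<bar>)"
    by (rule summable_rabs_comparison_test[OF _ sg]) (use fb in auto)
  have "\<bar>y t x\<bar> = \<bar>\<Sum>s. \<kappa> s * \<epsilon> (t - int s) x\<bar>" using sums_unique[OF sm] by simp
  also have "\<dots> \<le> (\<Sum>s. \<bar>\<kappa> s * \<epsilon> (t - int s) x\<bar>)" by (rule summable_rabs[OF sa])
  also have "\<dots> \<le> (\<Sum>s. \<bar>\<kappa> s\<bar> * K)" by (rule suminf_le[OF fb sa sg])
  also have "\<dots> = K * suminf (\<lambda>s. \<bar>\<kappa> s\<bar>)" using suminf_mult2[OF D2_abs, of K] by (metis mult.commute)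
  finally show ?thesis .
qed

lemma path1:
  assumes g: "good x"
  shows "dth \<beta> (\<lambda>n. y (int n) x) \<longlonglongrightarrow> 0" "sv (alg_theta \<beta> (\<lambda>n. y (int n) x))"
proof -
  define Y where "Y = (\<lambda>n. y (int n) x)"
  define YB where "YB = K * suminf (\<lambda>s. \<bar>\<kappa> s\<bar>)"
  have yb: "\<bar>Y n\<bar> \<le> YB" for n unfolding Y_def YB_def by (rule y_bnd[OF g])
  have Kp: "0 < Kstar x" and K1: "Kstar x < 1" using g unfolding good_def by auto
  have thb: "\<bar>alg_theta \<beta> Y n\<bar> \<le> Kstar x" if "n \<ge> Suc (kstar x)" for n
  proof -
    have h: "\<forall>t\<ge>1. \<bar>alg_theta \<beta> Y (t + kstar x)\<bar> \<le> Kstar x" using g unfolding good_def Y_def by auto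
    have "1 \<le> n - kstar x" using that by simp
    with h have "\<bar>alg_theta \<beta> Y ((n - kstar x) + kstar x)\<bar> \<le> Kstar x" by blast
    moreover have "(n - kstar x) + kstar x = n" using that by simp
    ultimately show ?thesis by simp
  qed
  have eps: "\<bar>\<epsilon> t x\<bar> \<le> K" for t using g unfolding good_def by auto
  have bthb: "\<bar>\<beta> * alg_theta \<beta> Y n\<bar> \<le> Kstar x" if "n \<ge> Suc (kstar x)" for n
  proof -
    have "\<bar>\<beta> * alg_theta \<beta> Y n\<bar> = \<beta> * \<bar>alg_theta \<beta> Y n\<bar>" using beta by (simp add: abs_mult)
    also have "\<dots> \<le> 1 * Kstar x" using beta thb[OF that] by (intro mult_mono) auto
    finally show ?thesis by simp
  qed
  have Be: "Bseq (alg_e \<beta> Y)"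
  proof (rule bounded_rec[where N = "Suc (kstar x)" and B = YB and c = "Kstar x"])
    fix n assume n: "n \<ge> Suc (kstar x)"
    show "\<bar>alg_e \<beta> Y (Suc n)\<bar> \<le> YB + Kstar x * \<bar>alg_e \<beta> Y n\<bar>"
    proof -
      have eq: "alg_e \<beta> Y (Suc n) = Y (Suc n) - alg_theta \<beta> Y n * alg_e \<beta> Y n" using n by (simp add: alg_rec)
      show ?thesis unfolding eq using n by (intro abs_rec2 yb thb) auto
    qed
  qed (use Kp K1 in auto)
  have Bx: "Bseq (alg_x \<beta> Y)"
  proof (rule bounded_rec[where N = "Suc (kstar x)" and B = YB and c = "Kstar x"])
    fix n assume n: "n \<ge> Suc (kstar x)"
    show "\<bar>alg_x \<beta> Y (Suc n)\<bar> \<le> YB + Kstar x * \<bar>alg_x \<beta> Y n\<bar>"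
    proof -
      have eq: "alg_x \<beta> Y (Suc n) = Y (Suc n) - (\<beta> * alg_theta \<beta> Y n) * alg_x \<beta> Y n" using n by (simp add: alg_rec)
      show ?thesis unfolding eq using n by (intro abs_rec2 yb bthb) auto
    qed
  qed (use Kp K1 in auto)
  obtain XB where XB: "\<And>n. \<bar>alg_x \<beta> Y n\<bar> \<le> XB" using Bx unfolding Bseq_def by auto
  have Bp: "Bseq (alg_phi \<beta> Y)"
  proof (rule bounded_rec[where N = "Suc (kstar x)" and B = XB and c = "Kstar x"])
    fix n assume n: "n \<ge> Suc (kstar x)"
    show "\<bar>alg_phi \<beta> Y (Suc n)\<bar> \<le> XB + Kstar x * \<bar>alg_phi \<beta> Y n\<bar>"
    proof -
      have eq: "alg_phi \<beta> Y (Suc n) = alg_x \<beta> Y (Suc n) - alg_theta \<beta> Y n * alg_phi \<beta> Y n" using n by (simp add: alg_rec)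
      show ?thesis unfolding eq using n by (intro abs_rec2 XB thb) auto
    qed
  qed (use Kp K1 in auto)
  obtain PB where PB: "\<And>n. \<bar>alg_phi \<beta> Y n\<bar> \<le> PB" using Bp unfolding Bseq_def by auto
  obtain EB where EB: "\<And>n. \<bar>alg_e \<beta> Y n\<bar> \<le> EB" using Be unfolding Bseq_def by auto
  have Gp: "alg_phi \<beta> Y u = \<epsilon> (int u) x + Gf u x" if "u \<ge> 1" for u
    unfolding Y_def using g that unfolding good_def by (intro G_path) auto
  have Gb: "\<bar>Gf u x\<bar> \<le> PB + \<bar>K\<bar>" if "u \<ge> 1" for u
  proof -
    have "Gf u x = alg_phi \<beta> Y u - \<epsilon> (int u) x" using Gp[OF that] by simp
    then show ?thesis using PB[of u] eps[of "int u"] by (simp add: abs_le_iff)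
  qed
  define m where "m = nat \<lceil>PB + \<bar>K\<bar>\<rceil>"
  have mb: "PB + \<bar>K\<bar> \<le> real m" unfolding m_def by linarith
  have eK: "eK t x = \<epsilon> t x" for t using g unfolding good_def by auto
  have A: "(\<lambda>n. (\<Sum>u=1..<n. (\<epsilon> (int u) x)\<^sup>2 - \<sigma>2) / real n) \<longlonglongrightarrow> 0"
  proof -
    have "s1 x" using g unfolding good_def by auto
    moreover have "(if P then 0 else 1) * (z::real) = (if P then 0 else z)" for P z by simp
    ultimately show ?thesis unfolding s1_def eK sum_skip0[symmetric] by simp
  qed
  have B: "(\<lambda>n. (\<Sum>u=1..<n. Gf u x * \<epsilon> (int u) x) / real n) \<longlonglongrightarrow> 0"
  proof -
    have "s2 x" using g unfolding good_def by auto
    then have "(\<lambda>n. (\<Sum>u<n. (if u = 0 then 0 else clampr (real m) (Gf u x)) * eK (int u) x) / real n) \<longlonglongrightarrow> 0"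
      unfolding s2_def by blast
    moreover have "(\<Sum>u<n. (if u = 0 then 0 else clampr (real m) (Gf u x)) * eK (int u) x)
        = (\<Sum>u=1..<n. Gf u x * \<epsilon> (int u) x)" for n
    proof -
      have "(\<Sum>u<n. (if u = 0 then 0 else clampr (real m) (Gf u x)) * eK (int u) x)
         = (\<Sum>u<n. (if u = 0 then 0 else Gf u x * \<epsilon> (int u) x))"
      proof (rule sum.cong)
        fix u assume "u \<in> {..<n}"
        show "(if u = 0 then 0 else clampr (real m) (Gf u x)) * eK (int u) x = (if u = 0 then 0 else Gf u x * \<epsilon> (int u) x)"
        proof (cases "u = 0")
          case False
          then have "clampr (real m) (Gf u x) = Gf u x" using Gb[of u] mb by (intro clampr_id) auto
          then show ?thesis using False eK by simp
        qed simp
      qed simp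
      then show ?thesis by (simp add: sum_skip0)
    qed
    ultimately show ?thesis by simp
  qed
  have sp: "0 < \<sigma>2" by (rule sigma_pos)
  define R where "R n = (\<Sum>u=1..<n. (\<epsilon> (int u) x)\<^sup>2 - \<sigma>2) / real n + 2 * ((\<Sum>u=1..<n. Gf u x * \<epsilon> (int u) x) / real n) + \<sigma>2 - \<sigma>2 * inverse (real n)" for n
  have "R \<longlonglongrightarrow> 0 + 2 * 0 + \<sigma>2 - \<sigma>2 * 0"
    unfolding R_def by (intro tendsto_intros A B lim_inverse_n)
  then have Rl: "R \<longlonglongrightarrow> \<sigma>2" by simp
  have evR: "eventually (\<lambda>n. \<sigma>2 / 2 < R n) sequentially"
    using order_tendstoD(1)[OF Rl, of "\<sigma>2 / 2"] sp by simp
  have lowS: "alg_S \<beta> Y n \<ge> real n * R n" if n: "n \<ge> 1" for n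
  proof -
    have "alg_S \<beta> Y n = (\<Sum>u=1..<n. (alg_phi \<beta> Y u)\<^sup>2)" using n by (rule alg_S_sum)
    also have "\<dots> = (\<Sum>u=1..<n. (\<epsilon> (int u) x + Gf u x)\<^sup>2)" by (intro sum.cong refl) (simp add: Gp)
    also have "\<dots> \<ge> (\<Sum>u=1..<n. (\<epsilon> (int u) x)\<^sup>2 + 2 * (Gf u x * \<epsilon> (int u) x))"
      by (intro sum_mono) (simp add: power2_eq_square algebra_simps)
    finally have f1: "alg_S \<beta> Y n \<ge> (\<Sum>u=1..<n. (\<epsilon> (int u) x)\<^sup>2 + 2 * (Gf u x * \<epsilon> (int u) x))" .
    have c1: "(\<Sum>u=1..<n. (\<epsilon> (int u) x)\<^sup>2 - \<sigma>2) = (\<Sum>u=1..<n. (\<epsilon> (int u) x)\<^sup>2) - (real n - 1) * \<sigma>2"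
      using n by (simp add: sum_subtractf of_nat_diff)
    have c2: "(\<Sum>u=1..<n. (\<epsilon> (int u) x)\<^sup>2 + 2 * (Gf u x * \<epsilon> (int u) x)) = (\<Sum>u=1..<n. (\<epsilon> (int u) x)\<^sup>2) + 2 * (\<Sum>u=1..<n. Gf u x * \<epsilon> (int u) x)"
      by (simp add: sum.distrib sum_distrib_left)
    have "alg_S \<beta> Y n \<ge> (\<Sum>u=1..<n. (\<epsilon> (int u) x)\<^sup>2 - \<sigma>2) + 2 * (\<Sum>u=1..<n. Gf u x * \<epsilon> (int u) x) + (real n - 1) * \<sigma>2"
      using f1 c1 c2 by linarith
    moreover have "real n * R n = (\<Sum>u=1..<n. (\<epsilon> (int u) x)\<^sup>2 - \<sigma>2) + 2 * (\<Sum>u=1..<n. Gf u x * \<epsilon> (int u) x) + (real n - 1) * \<sigma>2"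
      unfolding R_def using n by (simp add: field_simps)
    ultimately show ?thesis by simp
  qed
  have invS: "(\<lambda>n. inverse (alg_S \<beta> Y n)) \<longlonglongrightarrow> 0"
  proof (rule Lim_null_comparison)
    show "(\<lambda>n. (2 / \<sigma>2) * inverse (real n)) \<longlonglongrightarrow> 0"
      by (rule tendsto_mult_right_zero[OF lim_inverse_n])
    show "\<forall>\<^sub>F n in sequentially. norm (inverse (alg_S \<beta> Y n)) \<le> 2 / \<sigma>2 * inverse (real n)"
      using evR eventually_ge_at_top[of 1]
    proof eventually_elim
      case (elim n)
      have pos: "0 < real n * (\<sigma>2 / 2)" using elim sp by simp
      have le: "real n * (\<sigma>2 / 2) \<le> alg_S \<beta> Y n"
        using lowS[OF elim(2)] elim(1) elim(2) by (smt (verit) mult_left_mono of_nat_0_le_iff)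
      then have "0 < alg_S \<beta> Y n" using pos by linarith
      then have "norm (inverse (alg_S \<beta> Y n)) = inverse (alg_S \<beta> Y n)" by simp
      also have "\<dots> \<le> inverse (real n * (\<sigma>2 / 2))" by (rule le_imp_inverse_le[OF le pos])
      also have "\<dots> = 2 / \<sigma>2 * inverse (real n)" by (simp add: field_simps)
      finally show ?case .
    qed
  qed
  have Bpe: "Bseq (\<lambda>u. alg_phi \<beta> Y (u - 1) * alg_e \<beta> Y u)"
  proof (rule Bseq_mult)
    show "Bseq (\<lambda>u. alg_phi \<beta> Y (u - 1))" by (rule BseqI'[where K = PB]) (use PB in simp)
  qed (rule Be)
  have "(\<lambda>u. alg_phi \<beta> Y (u - 1) * alg_e \<beta> Y u * inverse (alg_S \<beta> Y u)) \<longlonglongrightarrow> 0"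
    by (rule bseq_null_mult[OF Bpe invS])
  then have dth0: "dth \<beta> Y \<longlonglongrightarrow> 0"
    by (rule Lim_transform_eventually)
       (auto simp: eventually_sequentially dth_S divide_inverse intro!: exI[of _ 1])
  have "sv (alg_theta \<beta> Y)"
    unfolding sv_def
  proof
    show "Bseq (alg_theta \<beta> Y)" by (rule Bseq_ev[where N = "Suc (kstar x)"]) (rule thb)
    have "(\<lambda>n. dth \<beta> Y (Suc n)) \<longlonglongrightarrow> 0" using dth0 by (rule LIMSEQ_Suc)
    then show "(\<lambda>n. alg_theta \<beta> Y (Suc n) - alg_theta \<beta> Y n) \<longlonglongrightarrow> 0"
      by (simp add: dth_eq)
  qed
  with dth0 show "dth \<beta> (\<lambda>n. y (int n) x) \<longlonglongrightarrow> 0" "sv (alg_theta \<beta> (\<lambda>n. y (int n) x))"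
    unfolding Y_def by auto
qed

end

lemma null_mult_bseq: "(a :: nat \<Rightarrow> real) \<longlonglongrightarrow> 0 \<Longrightarrow> Bseq E \<Longrightarrow> (\<lambda>s. a s * E s) \<longlonglongrightarrow> 0"
  using bseq_null_mult[of E a] by (simp add: mult.commute)

context L4 begin

interpretation P: prob_space M by (rule prob)

lemma eps_sq_bseq: "good x \<Longrightarrow> Bseq (\<lambda>s. (\<epsilon> (int s - int j) x)\<^sup>2)"
proof -
  assume g: "good x"
  have "\<bar>\<epsilon> t x\<bar> \<le> K" for t using g unfolding good_def by auto
  then have "\<bar>(\<epsilon> t x)\<^sup>2\<bar> \<le> K\<^sup>2" for t using pow_bnd by blast
  then show ?thesis by (intro BseqI'[where K = "K\<^sup>2"]) simp
qed

lemma eps_bseq: "good x \<Longrightarrow> Bseq (\<lambda>s. \<epsilon> (int s - int j) x)"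
proof -
  assume g: "good x"
  have "\<bar>\<epsilon> t x\<bar> \<le> K" for t using g unfolding good_def by auto
  then show ?thesis by (intro BseqI'[where K = K]) simp
qed

lemma partA:
  fixes kt :: "nat \<Rightarrow> nat \<Rightarrow> 'a \<Rightarrow> real" and ktb :: "nat \<Rightarrow> 'a \<Rightarrow> real"
  assumes kb: "AE x in M. \<forall>j t. t \<ge> 1 \<longrightarrow> \<bar>kt j t x\<bar> \<le> ktb j x" and p: "p \<ge> 1"
  shows
  "(AE x in M. (\<lambda>t. (1 / real t) * (\<Sum>s = 2..t.
             (\<Sum>l = 1..min j (s - 1). kt (j - l) s x *
                (\<Prod>i = 1..l. (1 / real (s - i))
                    * inverse (alg_Pbar \<beta> (\<lambda>n. y (int n) x) (s - i))
                    * alg_phi \<beta> (\<lambda>n. y (int n) x) (s - i - 1)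
                    * alg_e \<beta> (\<lambda>n. y (int n) x) (s - i))) ^ p))
             \<longlonglongrightarrow> 0) \<and>
          (AE x in M. (\<lambda>t. (1 / real t) * (\<Sum>s = 2..t.
             (\<Sum>l = 1..min j (s - 1). kt (j - l) s x *
                (\<Sum>i = 0..l. (1 / real (s - i))
                    * inverse (alg_Pbar \<beta> (\<lambda>n. y (int n) x) (s - i))
                    * alg_phi \<beta> (\<lambda>n. y (int n) x) (s - i - 1)
                    * alg_e \<beta> (\<lambda>n. y (int n) x) (s - i))) ^ p))
             \<longlonglongrightarrow> 0) \<and>
          (AE x in M. (\<lambda>t. (1 / real t) * (\<Sum>s = 2..t.
             (\<Sum>l = 1..min j (s - 1). kt (j - l) s x *
                (\<Prod>i = 1..l. (1 / real (s - i))
                    * inverse (alg_Pbar \<beta> (\<lambda>n. y (int n) x) (s - i))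
                    * alg_phi \<beta> (\<lambda>n. y (int n) x) (s - i - 1)
                    * alg_e \<beta> (\<lambda>n. y (int n) x) (s - i))) ^ p
             * (\<epsilon> (int s - int j) x)\<^sup>2))
             \<longlonglongrightarrow> 0)"
  unfolding dth_def[symmetric]
proof (intro conjI)
  show "AE x in M. (\<lambda>t. 1 / real t * (\<Sum>s = 2..t. (\<Sum>l = 1..min j (s - 1). kt (j - l) s x *
      (\<Prod>i = 1..l. dth \<beta> (\<lambda>n. y (int n) x) (s - i))) ^ p)) \<longlonglongrightarrow> 0"
    using AE_good kb
  proof eventually_elim
    case (elim x)
    have "\<And>j t. t \<ge> 1 \<Longrightarrow> \<bar>kt j t x\<bar> \<le> ktb j x" using elim(2) by blast
    from inner1[OF path1(1)[OF elim(1)] this, where j = j]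
    show ?case by (intro cesaro pow_null p)
  qed
  show "AE x in M. (\<lambda>t. 1 / real t * (\<Sum>s = 2..t. (\<Sum>l = 1..min j (s - 1). kt (j - l) s x *
      (\<Sum>i = 0..l. dth \<beta> (\<lambda>n. y (int n) x) (s - i))) ^ p)) \<longlonglongrightarrow> 0"
    using AE_good kb
  proof eventually_elim
    case (elim x)
    have "\<And>j t. t \<ge> 1 \<Longrightarrow> \<bar>kt j t x\<bar> \<le> ktb j x" using elim(2) by blast
    from inner2[OF path1(1)[OF elim(1)] this, where j = j]
    show ?case by (intro cesaro pow_null p)
  qed
  show "AE x in M. (\<lambda>t. 1 / real t * (\<Sum>s = 2..t. (\<Sum>l = 1..min j (s - 1). kt (j - l) s x *
      (\<Prod>i = 1..l. dth \<beta> (\<lambda>n. y (int n) x) (s - i))) ^ p * (\<epsilon> (int s - int j) x)\<^sup>2)) \<longlonglongrightarrow> 0"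
    using AE_good kb
  proof eventually_elim
    case (elim x)
    have "\<And>j t. t \<ge> 1 \<Longrightarrow> \<bar>kt j t x\<bar> \<le> ktb j x" using elim(2) by blast
    from inner1[OF path1(1)[OF elim(1)] this, where j = j]
    show ?case by (intro cesaro null_mult_bseq pow_null p eps_sq_bseq elim(1))
  qed
qed

lemma partB:
  "AE x in M. (\<lambda>t.
            (1 / real t) * (\<Sum>s = 1..t.
               (kappa_phi \<kappa> \<beta> (alg_theta \<beta> (\<lambda>n. y (int n) x)) s j)\<^sup>2 * (\<epsilon> (int s - int j) x)\<^sup>2)
          - (1 / real t) * (\<Sum>s = i + 1..t.
               (kappa_phi \<kappa> \<beta> (alg_theta \<beta> (\<lambda>n. y (int n) x)) (s - i) j)\<^sup>2 * (\<epsilon> (int s - int j) x)\<^sup>2))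
          \<longlonglongrightarrow> 0"
  using AE_good
proof eventually_elim
  case (elim x)
  show ?case by (rule part_b_path[OF kphi_sv[OF path1(2)[OF elim]] eps_sq_bseq[OF elim]])
qed

definition "cpath j l x v = kappa_phi \<kappa> \<beta> (alg_theta \<beta> (\<lambda>n. y (int n) x)) v j * kappa_phi \<kappa> \<beta> (alg_theta \<beta> (\<lambda>n. y (int n) x)) v l"
definition "gm j l (m::nat) s x = (if l + 2 \<le> s then clampr (real m) (cpath j l x (s - j)) * eK (int s - int l) x else 0)"

lemma mart:
  assumes jl: "j < l"
  shows "AE x in M. \<forall>m::nat. (\<lambda>n. (\<Sum>u<n. gm j l m u x * eK (int u - int j) x) / real n) \<longlonglongrightarrow> 0"
proof -
  have "AE x in M. (\<lambda>n. (\<Sum>u<n. gm j l m u x * eK ((\<lambda>u. int u - int j) u) x) / real n) \<longlonglongrightarrow> 0" for m :: nat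
  proof (rule P.filt_slln[where F = F and B = "\<bar>K\<bar>" and Bg = "real m * \<bar>K\<bar>"])
    show "subalgebra M (F t)" for t by (rule F_subalg)
    show "s \<le> t \<Longrightarrow> f \<in> borel_measurable (F s) \<Longrightarrow> f \<in> borel_measurable (F t)" for s t and f :: "'a \<Rightarrow> real"
      by (rule F_mono)
    show "\<And>u n. u < n \<Longrightarrow> int u - int j < int n - int j" by simp
    show "eK t \<in> borel_measurable (F t)" for t by (rule eK_F)
    show "\<bar>eK t x\<bar> \<le> \<bar>K\<bar>" for t x by (rule eK_b)
    show "integral\<^sup>L M (\<lambda>x. h x * eK t x) = 0"
      if "h \<in> borel_measurable (F (t - 1))" "\<And>x. x \<in> space M \<Longrightarrow> \<bar>h x\<bar> \<le> Bh" for t h Bh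
      by (rule orth_eps[OF that])
    show "gm j l m s \<in> borel_measurable (F (int s - int j - 1))" for s
    proof (cases "l + 2 \<le> s")
      case True
      have i: "int (s - j) - 1 = int s - int j - 1" using True jl by simp
      have c1: "(\<lambda>x. kappa_phi \<kappa> \<beta> (alg_theta \<beta> (\<lambda>n. y (int n) x)) (s - j) j') \<in> borel_measurable (F (int s - int j - 1))" for j'
        using kphi_meas[of \<kappa> \<beta> y "s - j" j' M] unfolding i .
      have c2: "eK (int s - int l) \<in> borel_measurable (F (int s - int j - 1))"
        by (rule F_mono[OF _ eK_F]) (use jl in simp)
      show ?thesis using True c1[of j] c1[of l] c2 unfolding gm_def[abs_def] cpath_def by measurable
    next
      case False then show ?thesis unfolding gm_def[abs_def] by simp
    qed
    show "\<bar>gm j l m s x\<bar> \<le> real m * \<bar>K\<bar>" for s x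
    proof (cases "l + 2 \<le> s")
      case True
      have "\<bar>clampr (real m) (cpath j l x (s - j))\<bar> * \<bar>eK (int s - int l) x\<bar> \<le> real m * \<bar>K\<bar>"
        by (intro mult_mono clampr_abs eK_b) auto
      then show ?thesis using True unfolding gm_def by (simp add: abs_mult)
    qed (simp add: gm_def)
  qed
  then show ?thesis by (subst AE_all_countable) simp
qed

lemma partC_lt:
  assumes jl: "j < l"
  shows "AE x in M. (\<lambda>t. (1 / real t) * (\<Sum>s = max (j + 2) (l + 2)..t.
            kappa_phi \<kappa> \<beta> (alg_theta \<beta> (\<lambda>n. y (int n) x)) s j * \<epsilon> (int s - int j) x
            * kappa_phi \<kappa> \<beta> (alg_theta \<beta> (\<lambda>n. y (int n) x)) s l * \<epsilon> (int s - int l) x))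
          \<longlonglongrightarrow> 0"
  using AE_good mart[OF jl]
proof eventually_elim
  case (elim x)
  let ?kj = "\<lambda>s. kappa_phi \<kappa> \<beta> (alg_theta \<beta> (\<lambda>n. y (int n) x)) s j"
  let ?kl = "\<lambda>s. kappa_phi \<kappa> \<beta> (alg_theta \<beta> (\<lambda>n. y (int n) x)) s l"
  have sth: "sv (alg_theta \<beta> (\<lambda>n. y (int n) x))" by (rule path1(2)[OF elim(1)])
  have kj: "sv ?kj" and kl: "sv ?kl" by (rule kphi_sv[OF sth])+
  have "Bseq (cpath j l x)" unfolding cpath_def[abs_def] by (intro sv_Bseq sv_mult kj kl)
  then obtain CB where CB: "\<And>v. \<bar>cpath j l x v\<bar> \<le> CB" unfolding Bseq_def by auto
  define m where "m = nat \<lceil>CB\<rceil>"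
  have mb: "CB \<le> real m" unfolding m_def by linarith
  have eK: "eK t x = \<epsilon> t x" for t using elim(1) unfolding good_def by auto
  define f where "f s = ?kj (s - j) * ?kl (s - j) * \<epsilon> (int s - int j) x * \<epsilon> (int s - int l) x" for s
  have gf: "gm j l m u x * eK (int u - int j) x = (if l + 2 \<le> u then f u else 0)" for u
  proof (cases "l + 2 \<le> u")
    case True
    have "clampr (real m) (cpath j l x (u - j)) = cpath j l x (u - j)" using CB[of "u - j"] mb by (intro clampr_id) auto
    then show ?thesis using True unfolding gm_def f_def eK cpath_def by simp
  qed (simp add: gm_def)
  have se: "(\<Sum>u<Suc t. gm j l m u x * eK (int u - int j) x) = (\<Sum>s = l + 2..t. f s)" for t
  proof -
    have "{u \<in> {..<Suc t}. l + 2 \<le> u} = {l + 2..t}" by auto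
    then show ?thesis unfolding gf using sum.inter_filter[of "{..<Suc t}" f "\<lambda>u. l + 2 \<le> u"] by simp
  qed
  have "(\<lambda>n. (\<Sum>u<n. gm j l m u x * eK (int u - int j) x) / real n) \<longlonglongrightarrow> 0" using elim(2) by blast
  then have "(\<lambda>t. (\<Sum>u<Suc t. gm j l m u x * eK (int u - int j) x) / real (Suc t)) \<longlonglongrightarrow> 0"
    by (rule LIMSEQ_Suc)
  then have "(\<lambda>t. (real (Suc t) / real t) * ((\<Sum>s = l + 2..t. f s) / real (Suc t))) \<longlonglongrightarrow> 1 * 0"
    unfolding se by (intro tendsto_mult LIMSEQ_Suc_n_over_n)
  moreover have "(real (Suc t) / real t) * ((\<Sum>s = l + 2..t. f s) / real (Suc t)) = (1 / real t) * (\<Sum>s = l + 2..t. f s)" for t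
    by (simp add: field_simps del: of_nat_Suc)
  ultimately have mt: "(\<lambda>t. (1 / real t) * (\<Sum>s = l + 2..t. f s)) \<longlonglongrightarrow> 0" by simp
  have "max (j + 2) (l + 2) = l + 2" using jl by simp
  then show ?case
    using part_c_path[OF kj kl eps_bseq[OF elim(1)] eps_bseq[OF elim(1)], where m = "l + 2" and j = j] mt unfolding f_def by simp
qed

lemma partC:
  assumes jl: "j \<noteq> l"
  shows "AE x in M. (\<lambda>t. (1 / real t) * (\<Sum>s = max (j + 2) (l + 2)..t.
            kappa_phi \<kappa> \<beta> (alg_theta \<beta> (\<lambda>n. y (int n) x)) s j * \<epsilon> (int s - int j) x
            * kappa_phi \<kappa> \<beta> (alg_theta \<beta> (\<lambda>n. y (int n) x)) s l * \<epsilon> (int s - int l) x))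
          \<longlonglongrightarrow> 0"
proof (cases "j < l")
  case True then show ?thesis by (rule partC_lt)
next
  case False
  then have "l < j" using jl by simp
  from partC_lt[OF this] show ?thesis by (simp add: max.commute mult_ac)
qed

end

theorem lemma4p1:
  fixes M :: "'a measure"
    and y \<epsilon> :: "int \<Rightarrow> 'a \<Rightarrow> real"
    and \<kappa> :: "nat \<Rightarrow> real"
    and \<sigma>2 K \<beta> :: real
    and kstar :: "'a \<Rightarrow> nat" and Kstar :: "'a \<Rightarrow> real"
  assumes prob: "prob_space M"
    and y_rv: "\<And>t. y t \<in> borel_measurable M"
    and y_sq_int: "\<And>t. integrable M (\<lambda>x. (y t x)\<^sup>2)"
    and y_mean0: "\<And>t. integral\<^sup>L M (y t) = 0"
    and y_cov_stat: "\<And>t h. integral\<^sup>L M (\<lambda>x. y (t + h) x * y t x) = integral\<^sup>L M (\<lambda>x. y h x * y 0 x)"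
    and D1: "measure M {x \<in> space M. (y 1 x)\<^sup>2 > 0} = 1"
    and D2_k0: "\<kappa> 0 = 1"
    and D2_abs: "summable (\<lambda>s. \<bar>\<kappa> s\<bar>)"
    and D2_root: "\<And>z::complex. norm z \<le> 1 \<Longrightarrow> (\<Sum>s. complex_of_real (\<kappa> s) * z ^ s) \<noteq> 0"
    and D2_rep: "AE x in M. \<forall>t. (\<lambda>s. \<kappa> s * \<epsilon> (t - int s) x) sums y t x"
    and mds_meas: "\<And>t. \<epsilon> t \<in> borel_measurable (nat_filt M y t)"
    and mds_int: "\<And>t. integrable M (\<epsilon> t)"
    and mds: "\<And>t. AE x in M. real_cond_exp M (nat_filt M y (t - 1)) (\<epsilon> t) x = 0"
    and D3: "\<And>t. AE x in M. real_cond_exp M (nat_filt M y (t - 1)) (\<lambda>x. (\<epsilon> t x)\<^sup>2) x = \<sigma>2"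
    and D4: "AE x in M. \<forall>t. \<bar>\<epsilon> t x\<bar> \<le> K"
    and beta: "0 \<le> \<beta>" "\<beta> \<le> 1"
    and kstar_rv: "kstar \<in> measurable M (count_space UNIV)"
    and Kstar_rv: "Kstar \<in> borel_measurable M"
    and Kstar_bd: "AE x in M. 0 < Kstar x \<and> Kstar x < 1"
    and theta_bd: "AE x in M. \<forall>t\<ge>1.
        \<bar>alg_theta \<beta> (\<lambda>n. y (int n) x) (t + kstar x)\<bar> \<le> Kstar x"
  shows
    "(\<forall>(kt :: nat \<Rightarrow> nat \<Rightarrow> 'a \<Rightarrow> real) (ktb :: nat \<Rightarrow> 'a \<Rightarrow> real).
        (\<forall>j t. t \<ge> 1 \<longrightarrow> kt j t \<in> borel_measurable (nat_filt M y (int t - 1))) \<and>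
        (AE x in M. \<forall>j t. t \<ge> 1 \<longrightarrow> \<bar>kt j t x\<bar> \<le> ktb j x) \<and>
        (AE x in M. summable (\<lambda>j. ktb j x)) \<longrightarrow>
        (\<forall>p::nat. p \<ge> 1 \<longrightarrow> (\<forall>j::nat.
          (AE x in M. (\<lambda>t. (1 / real t) * (\<Sum>s = 2..t.
             (\<Sum>l = 1..min j (s - 1). kt (j - l) s x *
                (\<Prod>i = 1..l. (1 / real (s - i))
                    * inverse (alg_Pbar \<beta> (\<lambda>n. y (int n) x) (s - i))
                    * alg_phi \<beta> (\<lambda>n. y (int n) x) (s - i - 1)
                    * alg_e \<beta> (\<lambda>n. y (int n) x) (s - i))) ^ p))
             \<longlonglongrightarrow> 0) \<and>
          (AE x in M. (\<lambda>t. (1 / real t) * (\<Sum>s = 2..t.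
             (\<Sum>l = 1..min j (s - 1). kt (j - l) s x *
                (\<Sum>i = 0..l. (1 / real (s - i))
                    * inverse (alg_Pbar \<beta> (\<lambda>n. y (int n) x) (s - i))
                    * alg_phi \<beta> (\<lambda>n. y (int n) x) (s - i - 1)
                    * alg_e \<beta> (\<lambda>n. y (int n) x) (s - i))) ^ p))
             \<longlonglongrightarrow> 0) \<and>
          (AE x in M. (\<lambda>t. (1 / real t) * (\<Sum>s = 2..t.
             (\<Sum>l = 1..min j (s - 1). kt (j - l) s x *
                (\<Prod>i = 1..l. (1 / real (s - i))
                    * inverse (alg_Pbar \<beta> (\<lambda>n. y (int n) x) (s - i))
                    * alg_phi \<beta> (\<lambda>n. y (int n) x) (s - i - 1)
                    * alg_e \<beta> (\<lambda>n. y (int n) x) (s - i))) ^ p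
             * (\<epsilon> (int s - int j) x)\<^sup>2))
             \<longlonglongrightarrow> 0))))
     \<and>
     (\<forall>i j :: nat. i \<le> j \<longrightarrow>
        (AE x in M. (\<lambda>t.
            (1 / real t) * (\<Sum>s = 1..t.
               (kappa_phi \<kappa> \<beta> (alg_theta \<beta> (\<lambda>n. y (int n) x)) s j)\<^sup>2 * (\<epsilon> (int s - int j) x)\<^sup>2)
          - (1 / real t) * (\<Sum>s = i + 1..t.
               (kappa_phi \<kappa> \<beta> (alg_theta \<beta> (\<lambda>n. y (int n) x)) (s - i) j)\<^sup>2 * (\<epsilon> (int s - int j) x)\<^sup>2))
          \<longlonglongrightarrow> 0))
     \<and>
     (\<forall>j l :: nat. j \<noteq> l \<longrightarrow>
        (AE x in M. (\<lambda>t. (1 / real t) * (\<Sum>s = max (j + 2) (l + 2)..t.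
            kappa_phi \<kappa> \<beta> (alg_theta \<beta> (\<lambda>n. y (int n) x)) s j * \<epsilon> (int s - int j) x
            * kappa_phi \<kappa> \<beta> (alg_theta \<beta> (\<lambda>n. y (int n) x)) s l * \<epsilon> (int s - int l) x))
          \<longlonglongrightarrow> 0))"
proof -
  have L: "L4 M y \<epsilon> \<kappa> \<sigma>2 K \<beta> kstar Kstar"
    unfolding L4_def using prob y_rv D1 D2_k0 D2_abs D2_rep mds_meas mds D3 D4 beta Kstar_bd theta_bd by blast
  interpret L4 M y \<epsilon> \<kappa> \<sigma>2 K \<beta> kstar Kstar by (rule L)
  show ?thesis
  proof (intro conjI allI impI)
    fix kt :: "nat \<Rightarrow> nat \<Rightarrow> 'a \<Rightarrow> real" and ktb :: "nat \<Rightarrow> 'a \<Rightarrow> real" and p j :: nat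
    assume h: "(\<forall>j t. t \<ge> 1 \<longrightarrow> kt j t \<in> borel_measurable (nat_filt M y (int t - 1))) \<and>
        (AE x in M. \<forall>j t. t \<ge> 1 \<longrightarrow> \<bar>kt j t x\<bar> \<le> ktb j x) \<and>
        (AE x in M. summable (\<lambda>j. ktb j x))" and p: "p \<ge> 1"
    from h have kb: "AE x in M. \<forall>j t. t \<ge> 1 \<longrightarrow> \<bar>kt j t x\<bar> \<le> ktb j x" by blast
    note A = partA[OF kb p, where j = j]
    show "AE x in M. (\<lambda>t. (1 / real t) * (\<Sum>s = 2..t.
             (\<Sum>l = 1..min j (s - 1). kt (j - l) s x *
                (\<Prod>i = 1..l. (1 / real (s - i))
                    * inverse (alg_Pbar \<beta> (\<lambda>n. y (int n) x) (s - i))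
                    * alg_phi \<beta> (\<lambda>n. y (int n) x) (s - i - 1)
                    * alg_e \<beta> (\<lambda>n. y (int n) x) (s - i))) ^ p))
             \<longlonglongrightarrow> 0" using A by blast
    show "AE x in M. (\<lambda>t. (1 / real t) * (\<Sum>s = 2..t.
             (\<Sum>l = 1..min j (s - 1). kt (j - l) s x *
                (\<Sum>i = 0..l. (1 / real (s - i))
                    * inverse (alg_Pbar \<beta> (\<lambda>n. y (int n) x) (s - i))
                    * alg_phi \<beta> (\<lambda>n. y (int n) x) (s - i - 1)
                    * alg_e \<beta> (\<lambda>n. y (int n) x) (s - i))) ^ p))
             \<longlonglongrightarrow> 0" using A by blast
    show "AE x in M. (\<lambda>t. (1 / real t) * (\<Sum>s = 2..t.
             (\<Sum>l = 1..min j (s - 1). kt (j - l) s x *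
                (\<Prod>i = 1..l. (1 / real (s - i))
                    * inverse (alg_Pbar \<beta> (\<lambda>n. y (int n) x) (s - i))
                    * alg_phi \<beta> (\<lambda>n. y (int n) x) (s - i - 1)
                    * alg_e \<beta> (\<lambda>n. y (int n) x) (s - i))) ^ p
             * (\<epsilon> (int s - int j) x)\<^sup>2))
             \<longlonglongrightarrow> 0" using A by blast
  next
    fix i j :: nat assume "i \<le> j"
    show "AE x in M. (\<lambda>t.
            (1 / real t) * (\<Sum>s = 1..t.
               (kappa_phi \<kappa> \<beta> (alg_theta \<beta> (\<lambda>n. y (int n) x)) s j)\<^sup>2 * (\<epsilon> (int s - int j) x)\<^sup>2)
          - (1 / real t) * (\<Sum>s = i + 1..t.
               (kappa_phi \<kappa> \<beta> (alg_theta \<beta> (\<lambda>n. y (int n) x)) (s - i) j)\<^sup>2 * (\<epsilon> (int s - int j) x)\<^sup>2))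
          \<longlonglongrightarrow> 0" by (rule partB)
  next
    fix j l :: nat assume "j \<noteq> l"
    then show "AE x in M. (\<lambda>t. (1 / real t) * (\<Sum>s = max (j + 2) (l + 2)..t.
            kappa_phi \<kappa> \<beta> (alg_theta \<beta> (\<lambda>n. y (int n) x)) s j * \<epsilon> (int s - int j) x
            * kappa_phi \<kappa> \<beta> (alg_theta \<beta> (\<lambda>n. y (int n) x)) s l * \<epsilon> (int s - int l) x))
          \<longlonglongrightarrow> 0" by (rule partC)
  qed
qed

end
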